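(* If a weighted tetrahedron $(\mathcal T,O)$ (with $O\in\operatorname{int}\mathcal T$) is mono-unstable, then it has a stable equilibrium on exactly two of its faces.
   Context: $(\mathcal P,O)$, for a convex polyhedron $\mathcal P$ and $O\in\operatorname{int}\mathcal P$, is in equilibrium on a face, edge or vertex $X$ if there exists $Q$ in the relative interior of $X$ (a vertex being its own relative interior) such that the plane perpendicular to $[O,Q]$ at $Q$ supports $\mathcal P$; equilibria on faces are stable, on vertices unstable. $(\mathcal P,O)$ is mono-unstable if exactly one vertex carries an equilibrium. *)

theory Defs
  imports "HOL-Analysis.Analysis"
begin

definition supporting_plane_at :: "(real^3) set \<Rightarrow> real^3 \<Rightarrow> real^3 \<Rightarrow> bool" where
  "supporting_plane_at S a Q \<longleftrightarrow>
     a \<noteq> 0 \<and> S \<inter> {x. a \<bullet> x = a \<bullet> Q} \<noteq> {} \<and>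
     ((\<forall>x\<in>S. a \<bullet> x \<le> a \<bullet> Q) \<or> (\<forall>x\<in>S. a \<bullet> x \<ge> a \<bullet> Q))"

definition equilibrium_on :: "(real^3) set \<Rightarrow> real^3 \<Rightarrow> (real^3) set \<Rightarrow> bool" where
  "equilibrium_on P c X \<longleftrightarrow> (\<exists>Q \<in> rel_interior X. supporting_plane_at P (Q - c) Q)"

definition is_tetrahedron :: "(real^3) set \<Rightarrow> bool" where
  "is_tetrahedron T \<longleftrightarrow> (\<exists>V. finite V \<and> card V = 4 \<and> \<not> affine_dependent V \<and> T = convex hull V)"

definition faces_of :: "(real^3) set \<Rightarrow> (real^3) set set" where
  "faces_of P = {F. F face_of P \<and> aff_dim F = 2}"

definition vertices_of :: "(real^3) set \<Rightarrow> (real^3) set" where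
  "vertices_of P = {v. {v} face_of P}"

definition mono_unstable :: "(real^3) set \<Rightarrow> real^3 \<Rightarrow> bool" where
  "mono_unstable P c \<longleftrightarrow> (\<exists>!v. v \<in> vertices_of P \<and> equilibrium_on P c {v})"

end

theory Submission
  imports Defs
begin

definition gg :: "real^3 \<Rightarrow> real^3 \<Rightarrow> real^3 \<Rightarrow> real" where
  "gg z x y = inner (x - z) (y - z)"

lemma gg_sym: "gg z x y = gg z y x"
  by (simp add: gg_def inner_commute)

definition arcz :: "real^3 \<Rightarrow> real^3 \<Rightarrow> real^3 \<Rightarrow> bool" where
  "arcz z x y \<longleftrightarrow> inner (z - x) (y - x) < 0"

lemma arcz_gg: "arcz z x y \<longleftrightarrow> gg z x x < gg z x y"
proof -
  have "inner (z - x) (y - x) = gg z x x - gg z x y"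
    unfolding gg_def by (simp add: inner_diff_left inner_diff_right inner_commute algebra_simps)
  thus ?thesis unfolding arcz_def by linarith
qed

lemma gg_self_pos: "x \<noteq> z \<Longrightarrow> 0 < gg z x x"
  unfolding gg_def by simp

lemma gg_CS: "(gg z x y)^2 \<le> gg z x x * gg z y y"
  unfolding gg_def by (rule Cauchy_Schwarz_ineq)

lemma arcz_incr: "arcz z x y \<Longrightarrow> gg z x x < gg z y y"
proof -
  assume a: "arcz z x y"
  have "gg z y y = inner (y - x) (y - x) + 2 * inner (x - z) (y - x) + gg z x x"
    unfolding gg_def by (simp add: inner_diff_left inner_diff_right inner_commute algebra_simps)
  moreover have "inner (x - z) (y - x) > 0" using a unfolding arcz_def
    by (metis inner_minus_left minus_diff_eq neg_0_less_iff_less)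
  moreover have "inner (y - x) (y - x) \<ge> 0" by simp
  ultimately show ?thesis by linarith
qed

lemma arcz_pos: "arcz z x y \<Longrightarrow> 0 < gg z x y"
  using arcz_gg[of z x y] gg_self_pos[of x z] by (smt (verit) gg_def inner_ge_zero)

definition cfg :: "real^3 \<Rightarrow> (real^3 \<Rightarrow> real) \<Rightarrow> real^3 \<Rightarrow> real^3 \<Rightarrow> real^3 \<Rightarrow> real^3 \<Rightarrow> bool" where
  "cfg z w a b c d \<longleftrightarrow> distinct [a,b,c,d] \<and> \<not> affine_dependent {a,b,c,d} \<and>
     (\<forall>v\<in>{a,b,c,d}. 0 < w v) \<and> sum w {a,b,c,d} = 1 \<and> z = (\<Sum>v\<in>{a,b,c,d}. w v *\<^sub>R v)"

lemma cfg_perm: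
  assumes "cfg z w a b c d" "{a',b',c',d'} = {a,b,c,d}" "distinct [a',b',c',d']"
  shows "cfg z w a' b' c' d'"
  using assms unfolding cfg_def by simp

lemma cfg_expand:
  assumes "cfg z w a b c d"
  shows "w a + w b + w c + w d = 1" "z = w a *\<^sub>R a + w b *\<^sub>R b + w c *\<^sub>R c + w d *\<^sub>R d"
    "0 < w a" "0 < w b" "0 < w c" "0 < w d"
  using assms unfolding cfg_def by (auto simp: algebra_simps)

lemma cfg_W:
  assumes "cfg z w a b c d"
  shows "w a * gg z a m + w b * gg z b m + w c * gg z c m + w d * gg z d m = 0"
proof -
  note e = cfg_expand[OF assms]
  have "w a *\<^sub>R (a - z) + w b *\<^sub>R (b - z) + w c *\<^sub>R (c - z) + w d *\<^sub>R (d - z)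
        = (w a *\<^sub>R a + w b *\<^sub>R b + w c *\<^sub>R c + w d *\<^sub>R d) - (w a + w b + w c + w d) *\<^sub>R z"
    by (simp add: algebra_simps scaleR_add_left)
  also have "\<dots> = 0" using e(1,2) by simp
  finally have "inner (w a *\<^sub>R (a - z) + w b *\<^sub>R (b - z) + w c *\<^sub>R (c - z) + w d *\<^sub>R (d - z)) (m - z) = 0"
    by simp
  thus ?thesis unfolding gg_def by (simp add: inner_add_left)
qed

lemma cfg_ne:
  assumes "cfg z w a b c d"
  shows "a \<noteq> z"
proof
  assume az: "a = z"
  note e = cfg_expand[OF assms]
  have fin: "finite {a,b,c,d}" by simp
  define U where "U v = (if v = a then w a - 1 else w v)" for v
  have dist: "distinct [a,b,c,d]" using assms unfolding cfg_def by simp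
  hence ne: "b \<noteq> a" "c \<noteq> a" "d \<noteq> a" by auto
  have s1: "sum U {a,b,c,d} = U a + U b + U c + U d" using dist by simp
  have s2: "(\<Sum>v\<in>{a,b,c,d}. U v *\<^sub>R v) = U a *\<^sub>R a + U b *\<^sub>R b + U c *\<^sub>R c + U d *\<^sub>R d"
    using dist by simp
  have u: "U a = w a - 1" "U b = w b" "U c = w c" "U d = w d" using ne by (auto simp: U_def)
  have "sum U {a,b,c,d} = 0" unfolding s1 u using e(1) by simp
  moreover have "U d \<noteq> 0" using e(6) u by simp
  moreover have "(\<Sum>v\<in>{a,b,c,d}. U v *\<^sub>R v) = 0"
    unfolding s2 u using e(2) az by (simp add: algebra_simps)
  ultimately have "affine_dependent {a,b,c,d}"
    unfolding affine_dependent_explicit_finite[OF fin] by blast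
  thus False using assms unfolding cfg_def by simp
qed
definition bet :: "real \<Rightarrow> real \<Rightarrow> real \<Rightarrow> real \<Rightarrow> real \<Rightarrow> real" where
  "bet xx yy xy xz yz = xx*yy - xy^2 - yy*xz + xy*xz - xx*yz + xy*yz"

lemma lstar_nbd:
  fixes gab gbb gbc gbd wa wb wc wd gaa :: real
  assumes "wa*gab + wb*gbb + wc*gbc + wd*gbd = 0" "0 < wa" "0 < wb" "0 < wc" "0 < wd"
    "0 < gaa" "0 < gbb" "gab > gaa" "gbc > gbb"
  shows "0 < - gbd"
proof -
  have "0 < wa*gab" "0 < wb*gbb" "0 < wc*gbc" using assms by (auto intro!: mult_pos_pos)
  hence "wd*gbd < 0" using assms(1) by linarith
  thus ?thesis using assms(5) by (simp add: mult_less_0_iff)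
qed

lemma lstar_nac:
  fixes gac gbc gcc gcd wa wb wc wd gbb :: real
  assumes "wa*gac + wb*gbc + wc*gcc + wd*gcd = 0" "0 < wa" "0 < wb" "0 < wc" "0 < wd"
    "0 < gbb" "0 < gcc" "gbc > gbb" "0 < gcd"
  shows "0 < - gac"
proof -
  have "0 < wb*gbc" "0 < wc*gcc" "0 < wd*gcd" using assms by (auto intro!: mult_pos_pos)
  hence "wa*gac < 0" using assms(1) by linarith
  thus ?thesis using assms(2) by (simp add: mult_less_0_iff)
qed
lemma lstar_dc_abd_ab:
  fixes gaa gbb gcc gdd gab gac gad gbc gbd gcd wa wb wc wd :: real
  assumes W: "wa*gaa + wb*gab + wc*gac + wd*gad = 0" "wa*gab + wb*gbb + wc*gbc + wd*gbd = 0"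
    "wa*gac + wb*gbc + wc*gcc + wd*gcd = 0" "wa*gad + wb*gbd + wc*gcd + wd*gdd = 0"
  and pos: "0 < wa" "0 < wb" "0 < wc" "0 < wd" "0 < gaa" "0 < gbb" "0 < gcc" "0 < gdd"
  and arcs: "gab > gaa" "gbc > gbb" "gcd > gdd"
  and CS: "gab^2 \<le> gaa*gbb" "gac^2 \<le> gaa*gcc" "gad^2 \<le> gaa*gdd" "gbc^2 \<le> gbb*gcc" "gbd^2 \<le> gbb*gdd" "gcd^2 \<le> gcc*gdd"
  shows "0 < bet gaa gbb gab gad gbd"
proof -
  have nbd: "0 < - gbd" using lstar_nbd[OF W(2) pos(1-4) pos(5,6) arcs(1,2)] .
  have gcdpos: "0 < gcd" using arcs(3) pos by linarith
  have nac: "0 < - gac" using lstar_nac[OF W(3) pos(1-4) pos(6,7) arcs(2) gcdpos] .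
  have a1: "0 < gab - gaa" "0 < gbc - gbb" "0 < gcd - gdd" using arcs by auto
  have m: "0 \<le> gaa*gbb - gab^2" "0 \<le> gaa*gcc - gac^2" "0 \<le> gaa*gdd - gad^2" "0 \<le> gbb*gcc - gbc^2" "0 \<le> gbb*gdd - gbd^2" "0 \<le> gcc*gdd - gcd^2" using CS by auto
  have id: "((1)*wa*wd) * (bet gaa gbb gab gad gbd) - ((1)*(wa*wc*(gab - gaa)*(- gac)) + (1)*(wa*wb*(gaa*gbb - gab^2)) + (1)*(wa*wd*(gaa*gbb - gab^2)) + (1)*(wa*wc*gaa*(gbc - gbb)) + (1)*(wa*wc*gaa*(- gac)) + (1)*(wa*wc*gaa*gbb) + (1)*(wc*wd*gbb*(- gbd)) + (1)*(wc*wd*gbb*(gcd - gdd)) + (1)*(wc*wd*gbb*gdd) + (1)*(wc*wd*(gbc - gbb)*(- gbd)) + (1)*(wd*wd*(gbb*gdd - gbd^2))) + ((wa*gaa + wb*gab + wc*gac + wd*gad)*((-1)*wa*gab) + (wa*gab + wb*gbb + wc*gbc + wd*gbd)*((-1)*wd*gbd + (1)*wa*gaa) + (wa*gac + wb*gbc + wc*gcc + wd*gcd)*(0) + (wa*gad + wb*gbd + wc*gcd + wd*gdd)*((1)*wd*gbb)) = 0"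
    unfolding bet_def by (simp add: algebra_simps power2_eq_square)
  have Wz: "(wa*gaa + wb*gab + wc*gac + wd*gad)*((-1)*wa*gab) + (wa*gab + wb*gbb + wc*gbc + wd*gbd)*((-1)*wd*gbd + (1)*wa*gaa) + (wa*gac + wb*gbc + wc*gcc + wd*gcd)*(0) + (wa*gad + wb*gbd + wc*gcd + wd*gdd)*((1)*wd*gbb) = 0" by (simp only: W mult_zero_left add_0_right add_0)
  have id2: "((1)*wa*wd) * (bet gaa gbb gab gad gbd) = (1)*(wa*wc*(gab - gaa)*(- gac)) + (1)*(wa*wb*(gaa*gbb - gab^2)) + (1)*(wa*wd*(gaa*gbb - gab^2)) + (1)*(wa*wc*gaa*(gbc - gbb)) + (1)*(wa*wc*gaa*(- gac)) + (1)*(wa*wc*gaa*gbb) + (1)*(wc*wd*gbb*(- gbd)) + (1)*(wc*wd*gbb*(gcd - gdd)) + (1)*(wc*wd*gbb*gdd) + (1)*(wc*wd*(gbc - gbb)*(- gbd)) + (1)*(wd*wd*(gbb*gdd - gbd^2))" using id Wz by linarith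
  have p0: "0 < wa*wc*(gab - gaa)*(- gac)" by (intro mult_pos_pos) (use pos a1 nbd nac in auto)
  have p1: "0 \<le> wa*wb*(gaa*gbb - gab^2)" by (intro mult_nonneg_nonneg) (use pos a1 nbd nac m in auto)
  have p2: "0 \<le> wa*wd*(gaa*gbb - gab^2)" by (intro mult_nonneg_nonneg) (use pos a1 nbd nac m in auto)
  have p3: "0 < wa*wc*gaa*(gbc - gbb)" by (intro mult_pos_pos) (use pos a1 nbd nac in auto)
  have p4: "0 < wa*wc*gaa*(- gac)" by (intro mult_pos_pos) (use pos a1 nbd nac in auto)
  have p5: "0 < wa*wc*gaa*gbb" by (intro mult_pos_pos) (use pos a1 nbd nac in auto)
  have p6: "0 < wc*wd*gbb*(- gbd)" by (intro mult_pos_pos) (use pos a1 nbd nac in auto)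
  have p7: "0 < wc*wd*gbb*(gcd - gdd)" by (intro mult_pos_pos) (use pos a1 nbd nac in auto)
  have p8: "0 < wc*wd*gbb*gdd" by (intro mult_pos_pos) (use pos a1 nbd nac in auto)
  have p9: "0 < wc*wd*(gbc - gbb)*(- gbd)" by (intro mult_pos_pos) (use pos a1 nbd nac in auto)
  have p10: "0 \<le> wd*wd*(gbb*gdd - gbd^2)" by (intro mult_nonneg_nonneg) (use pos a1 nbd nac m in auto)
  have Mpos: "0 < (1)*wa*wd" using pos by (simp add: mult_pos_pos add_pos_pos)
  have "0 < ((1)*wa*wd) * (bet gaa gbb gab gad gbd)" unfolding id2 using p0 p1 p2 p3 p4 p5 p6 p7 p8 p9 p10 by linarith
  thus ?thesis using Mpos by (simp add: zero_less_mult_iff)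
qed

lemma lstar_dc_abd_bd:
  fixes gaa gbb gcc gdd gab gac gad gbc gbd gcd wa wb wc wd :: real
  assumes W: "wa*gaa + wb*gab + wc*gac + wd*gad = 0" "wa*gab + wb*gbb + wc*gbc + wd*gbd = 0"
    "wa*gac + wb*gbc + wc*gcc + wd*gcd = 0" "wa*gad + wb*gbd + wc*gcd + wd*gdd = 0"
  and pos: "0 < wa" "0 < wb" "0 < wc" "0 < wd" "0 < gaa" "0 < gbb" "0 < gcc" "0 < gdd"
  and arcs: "gab > gaa" "gbc > gbb" "gcd > gdd"
  and CS: "gab^2 \<le> gaa*gbb" "gac^2 \<le> gaa*gcc" "gad^2 \<le> gaa*gdd" "gbc^2 \<le> gbb*gcc" "gbd^2 \<le> gbb*gdd" "gcd^2 \<le> gcc*gdd"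
  shows "0 < bet gbb gdd gbd gab gad"
proof -
  have nbd: "0 < - gbd" using lstar_nbd[OF W(2) pos(1-4) pos(5,6) arcs(1,2)] .
  have gcdpos: "0 < gcd" using arcs(3) pos by linarith
  have nac: "0 < - gac" using lstar_nac[OF W(3) pos(1-4) pos(6,7) arcs(2) gcdpos] .
  have a1: "0 < gab - gaa" "0 < gbc - gbb" "0 < gcd - gdd" using arcs by auto
  have m: "0 \<le> gaa*gbb - gab^2" "0 \<le> gaa*gcc - gac^2" "0 \<le> gaa*gdd - gad^2" "0 \<le> gbb*gcc - gbc^2" "0 \<le> gbb*gdd - gbd^2" "0 \<le> gcc*gdd - gcd^2" using CS by auto
  have id: "((1)*wa*wc) * (bet gbb gdd gbd gab gad) - ((1)*(wc*wc*gbb*(- gbd)) + (1)*(wa*wc*(gbb*gdd - gbd^2)) + (1)*(wc*wc*gbb*(gcd - gdd)) + (1)*(wb*wc*(gbb*gdd - gbd^2)) + (1)*(wc*wd*(gbb*gdd - gbd^2)) + (1)*(wc*wc*(gbc - gbb)*(- gbd)) + (2)*(wc*wc*gbb*gdd) + (1)*(wc*wc*(gcd - gdd)*(- gbd)) + (1)*(wc*wc*gdd*(- gbd)) + (1)*(wc*wc*gdd*(gbc - gbb))) + ((wa*gaa + wb*gab + wc*gac + wd*gad)*(0) + (wa*gab + wb*gbb + wc*gbc + wd*gbd)*((1)*wc*gdd + (-1)*wc*gbd) + (wa*gac + wb*gbc + wc*gcc + wd*gcd)*(0) + (wa*gad + wb*gbd + wc*gcd + wd*gdd)*((1)*wc*gbb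 + (-1)*wc*gbd)) = 0"
    unfolding bet_def by (simp add: algebra_simps power2_eq_square)
  have Wz: "(wa*gaa + wb*gab + wc*gac + wd*gad)*(0) + (wa*gab + wb*gbb + wc*gbc + wd*gbd)*((1)*wc*gdd + (-1)*wc*gbd) + (wa*gac + wb*gbc + wc*gcc + wd*gcd)*(0) + (wa*gad + wb*gbd + wc*gcd + wd*gdd)*((1)*wc*gbb + (-1)*wc*gbd) = 0" by (simp only: W mult_zero_left add_0_right add_0)
  have id2: "((1)*wa*wc) * (bet gbb gdd gbd gab gad) = (1)*(wc*wc*gbb*(- gbd)) + (1)*(wa*wc*(gbb*gdd - gbd^2)) + (1)*(wc*wc*gbb*(gcd - gdd)) + (1)*(wb*wc*(gbb*gdd - gbd^2)) + (1)*(wc*wd*(gbb*gdd - gbd^2)) + (1)*(wc*wc*(gbc - gbb)*(- gbd)) + (2)*(wc*wc*gbb*gdd) + (1)*(wc*wc*(gcd - gdd)*(- gbd)) + (1)*(wc*wc*gdd*(- gbd)) + (1)*(wc*wc*gdd*(gbc - gbb))" using id Wz by linarith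
  have p0: "0 < wc*wc*gbb*(- gbd)" by (intro mult_pos_pos) (use pos a1 nbd nac in auto)
  have p1: "0 \<le> wa*wc*(gbb*gdd - gbd^2)" by (intro mult_nonneg_nonneg) (use pos a1 nbd nac m in auto)
  have p2: "0 < wc*wc*gbb*(gcd - gdd)" by (intro mult_pos_pos) (use pos a1 nbd nac in auto)
  have p3: "0 \<le> wb*wc*(gbb*gdd - gbd^2)" by (intro mult_nonneg_nonneg) (use pos a1 nbd nac m in auto)
  have p4: "0 \<le> wc*wd*(gbb*gdd - gbd^2)" by (intro mult_nonneg_nonneg) (use pos a1 nbd nac m in auto)
  have p5: "0 < wc*wc*(gbc - gbb)*(- gbd)" by (intro mult_pos_pos) (use pos a1 nbd nac in auto)
  have p6: "0 < wc*wc*gbb*gdd" by (intro mult_pos_pos) (use pos a1 nbd nac in auto)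
  have p7: "0 < wc*wc*(gcd - gdd)*(- gbd)" by (intro mult_pos_pos) (use pos a1 nbd nac in auto)
  have p8: "0 < wc*wc*gdd*(- gbd)" by (intro mult_pos_pos) (use pos a1 nbd nac in auto)
  have p9: "0 < wc*wc*gdd*(gbc - gbb)" by (intro mult_pos_pos) (use pos a1 nbd nac in auto)
  have Mpos: "0 < (1)*wa*wc" using pos by (simp add: mult_pos_pos add_pos_pos)
  have "0 < ((1)*wa*wc) * (bet gbb gdd gbd gab gad)" unfolding id2 using p0 p1 p2 p3 p4 p5 p6 p7 p8 p9 by linarith
  thus ?thesis using Mpos by (simp add: zero_less_mult_iff)
qed

lemma lstar_dc_abd_ad:
  fixes gaa gbb gcc gdd gab gac gad gbc gbd gcd wa wb wc wd :: real
  assumes W: "wa*gaa + wb*gab + wc*gac + wd*gad = 0" "wa*gab + wb*gbb + wc*gbc + wd*gbd = 0"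
    "wa*gac + wb*gbc + wc*gcc + wd*gcd = 0" "wa*gad + wb*gbd + wc*gcd + wd*gdd = 0"
  and pos: "0 < wa" "0 < wb" "0 < wc" "0 < wd" "0 < gaa" "0 < gbb" "0 < gcc" "0 < gdd"
  and arcs: "gab > gaa" "gbc > gbb" "gcd > gdd"
  and CS: "gab^2 \<le> gaa*gbb" "gac^2 \<le> gaa*gcc" "gad^2 \<le> gaa*gdd" "gbc^2 \<le> gbb*gcc" "gbd^2 \<le> gbb*gdd" "gcd^2 \<le> gcc*gdd"
  shows "0 < bet gaa gdd gad gab gbd"
proof -
  have nbd: "0 < - gbd" using lstar_nbd[OF W(2) pos(1-4) pos(5,6) arcs(1,2)] .
  have gcdpos: "0 < gcd" using arcs(3) pos by linarith
  have nac: "0 < - gac" using lstar_nac[OF W(3) pos(1-4) pos(6,7) arcs(2) gcdpos] .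
  have a1: "0 < gab - gaa" "0 < gbc - gbb" "0 < gcd - gdd" using arcs by auto
  have m: "0 \<le> gaa*gbb - gab^2" "0 \<le> gaa*gcc - gac^2" "0 \<le> gaa*gdd - gad^2" "0 \<le> gbb*gcc - gbc^2" "0 \<le> gbb*gdd - gbd^2" "0 \<le> gcc*gdd - gcd^2" using CS by auto
  have id: "((1)*wa*wd) * (bet gaa gdd gad gab gbd) - ((1)*(wa*wc*(gab - gaa)*(- gac)) + (1)*(wa*wd*(gaa*gdd - gad^2)) + (1)*(wa*wb*(gaa*gbb - gab^2)) + (1)*(wa*wc*gaa*(gbc - gbb)) + (1)*(wa*wc*gaa*gbb) + (1)*(wa*wc*gaa*(- gac)) + (1)*(wc*wd*gdd*(- gbd)) + (1)*(wc*wd*gdd*(gbc - gbb)) + (1)*(wb*wd*(gbb*gdd - gbd^2)) + (1)*(wc*wd*(gcd - gdd)*(- gbd)) + (1)*(wc*wd*gbb*gdd)) + ((wa*gaa + wb*gab + wc*gac + wd*gad)*((-1)*wa*gab) + (wa*gab + wb*gbb + wc*gbc + wd*gbd)*((1)*wa*gaa + (-1)*wa*gad + (-1)*wc*gcd + (-1)*wb*gbd) + (wa*gac + wb*gbc + wc*gcc + wd*gcd)*(0) + (wa*gad + wb*gbd + wc*gcd + wd*gdd)*((1)*wa*gab + (1)*wb*gbb + (1)*wc*gbc)) = 0"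
    unfolding bet_def by (simp add: algebra_simps power2_eq_square)
  have Wz: "(wa*gaa + wb*gab + wc*gac + wd*gad)*((-1)*wa*gab) + (wa*gab + wb*gbb + wc*gbc + wd*gbd)*((1)*wa*gaa + (-1)*wa*gad + (-1)*wc*gcd + (-1)*wb*gbd) + (wa*gac + wb*gbc + wc*gcc + wd*gcd)*(0) + (wa*gad + wb*gbd + wc*gcd + wd*gdd)*((1)*wa*gab + (1)*wb*gbb + (1)*wc*gbc) = 0" by (simp only: W mult_zero_left add_0_right add_0)
  have id2: "((1)*wa*wd) * (bet gaa gdd gad gab gbd) = (1)*(wa*wc*(gab - gaa)*(- gac)) + (1)*(wa*wd*(gaa*gdd - gad^2)) + (1)*(wa*wb*(gaa*gbb - gab^2)) + (1)*(wa*wc*gaa*(gbc - gbb)) + (1)*(wa*wc*gaa*gbb) + (1)*(wa*wc*gaa*(- gac)) + (1)*(wc*wd*gdd*(- gbd)) + (1)*(wc*wd*gdd*(gbc - gbb)) + (1)*(wb*wd*(gbb*gdd - gbd^2)) + (1)*(wc*wd*(gcd - gdd)*(- gbd)) + (1)*(wc*wd*gbb*gdd)" using id Wz by linarith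
  have p0: "0 < wa*wc*(gab - gaa)*(- gac)" by (intro mult_pos_pos) (use pos a1 nbd nac in auto)
  have p1: "0 \<le> wa*wd*(gaa*gdd - gad^2)" by (intro mult_nonneg_nonneg) (use pos a1 nbd nac m in auto)
  have p2: "0 \<le> wa*wb*(gaa*gbb - gab^2)" by (intro mult_nonneg_nonneg) (use pos a1 nbd nac m in auto)
  have p3: "0 < wa*wc*gaa*(gbc - gbb)" by (intro mult_pos_pos) (use pos a1 nbd nac in auto)
  have p4: "0 < wa*wc*gaa*gbb" by (intro mult_pos_pos) (use pos a1 nbd nac in auto)
  have p5: "0 < wa*wc*gaa*(- gac)" by (intro mult_pos_pos) (use pos a1 nbd nac in auto)
  have p6: "0 < wc*wd*gdd*(- gbd)" by (intro mult_pos_pos) (use pos a1 nbd nac in auto)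
  have p7: "0 < wc*wd*gdd*(gbc - gbb)" by (intro mult_pos_pos) (use pos a1 nbd nac in auto)
  have p8: "0 \<le> wb*wd*(gbb*gdd - gbd^2)" by (intro mult_nonneg_nonneg) (use pos a1 nbd nac m in auto)
  have p9: "0 < wc*wd*(gcd - gdd)*(- gbd)" by (intro mult_pos_pos) (use pos a1 nbd nac in auto)
  have p10: "0 < wc*wd*gbb*gdd" by (intro mult_pos_pos) (use pos a1 nbd nac in auto)
  have Mpos: "0 < (1)*wa*wd" using pos by (simp add: mult_pos_pos add_pos_pos)
  have "0 < ((1)*wa*wd) * (bet gaa gdd gad gab gbd)" unfolding id2 using p0 p1 p2 p3 p4 p5 p6 p7 p8 p9 p10 by linarith
  thus ?thesis using Mpos by (simp add: zero_less_mult_iff)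
qed

lemma lstar_dc_acd_ac:
  fixes gaa gbb gcc gdd gab gac gad gbc gbd gcd wa wb wc wd :: real
  assumes W: "wa*gaa + wb*gab + wc*gac + wd*gad = 0" "wa*gab + wb*gbb + wc*gbc + wd*gbd = 0"
    "wa*gac + wb*gbc + wc*gcc + wd*gcd = 0" "wa*gad + wb*gbd + wc*gcd + wd*gdd = 0"
  and pos: "0 < wa" "0 < wb" "0 < wc" "0 < wd" "0 < gaa" "0 < gbb" "0 < gcc" "0 < gdd"
  and arcs: "gab > gaa" "gbc > gbb" "gcd > gdd"
  and CS: "gab^2 \<le> gaa*gbb" "gac^2 \<le> gaa*gcc" "gad^2 \<le> gaa*gdd" "gbc^2 \<le> gbb*gcc" "gbd^2 \<le> gbb*gdd" "gcd^2 \<le> gcc*gdd"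
  shows "0 < bet gaa gcc gac gad gcd"
proof -
  have nbd: "0 < - gbd" using lstar_nbd[OF W(2) pos(1-4) pos(5,6) arcs(1,2)] .
  have gcdpos: "0 < gcd" using arcs(3) pos by linarith
  have nac: "0 < - gac" using lstar_nac[OF W(3) pos(1-4) pos(6,7) arcs(2) gcdpos] .
  have a1: "0 < gab - gaa" "0 < gbc - gbb" "0 < gcd - gdd" using arcs by auto
  have m: "0 \<le> gaa*gbb - gab^2" "0 \<le> gaa*gcc - gac^2" "0 \<le> gaa*gdd - gad^2" "0 \<le> gbb*gcc - gbc^2" "0 \<le> gbb*gdd - gbd^2" "0 \<le> gcc*gdd - gcd^2" using CS by auto
  have id: "((2)*wa*wd + (2)*wb*wd + (2)*wc*wd) * (bet gaa gcc gac gad gcd) - ((1)*(wb*wb*(gab - gaa)*(gab - gaa)) + (2)*(wb*wc*gaa*gcc) + (2)*(wb*wb*gaa*(- gac)) + (2)*(wa*wb*gaa*(gbc - gbb)) + (2)*(wb*wb*gaa*(gbc - gbb)) + (2)*(wa*wb*gcc*(gab - gaa)) + (2)*(wa*wb*(gaa*gcc - gac^2)) + (2)*(wb*wb*gaa*(gab - gaa)) + (2)*(wb*wb*(gab - gaa)*(- gac)) + (2)*(wa*wa*(gaa*gcc - gac^2)) + (1)*(wd*wd*(gaa*gdd - gad^2)) + (2)*(wb*wb*gcc*(gab - gaa)) + (4)*(wa*wc*(gaa*gcc - gac^2)) + (2)*(wa*wd*(gaa*gcc - gac^2)) + (2)*(wb*wc*(gaa*gcc - gac^2)) + (2)*(wb*wd*(gaa*gcc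 - gac^2)) + (2)*(wc*wd*(gaa*gcc - gac^2)) + (1)*(wc*wc*(gaa*gcc - gac^2)) + (2)*(wa*wb*(gbc - gbb)*(- gac)) + (2)*(wb*wb*(gbc - gbb)*(- gac)) + (1)*(wb*wb*gaa*gbb) + (2)*(wb*wb*gaa*gcc) + (2)*(wb*wc*gcc*(gab - gaa)) + (2)*(wa*wb*gaa*gbb) + (2)*(wb*wd*(- gbd)*(- gac)) + (2)*(wa*wb*gaa*gcc) + (2)*(wa*wb*gbb*(- gac)) + (1)*(wb*wb*gaa*gaa)) + ((wa*gaa + wb*gab + wc*gac + wd*gad)*((1)*wb*gab + (-2)*wb*gac + (-1)*wd*gad + (-1)*wc*gac + (2)*wa*gcc + (2)*wb*gcc + (-2)*wb*gbc + (-2)*wd*gcd + (-4)*wa*gac) + (wa*gab + wb*gbb + wc*gbc + wd*gbd)*((2)*wb*gac + (-1)*wb*gaa) + (wa*gac + wb*gbc + wc*gcc + wd*gcd)*((2)*wb*gaa + (1)*wc*gaa + (4)*wa*gaa + (2)*wb*gab + (-2)*wb*gac + (-2)*wa*gac + (2)*wd*gad) + (wa*gad + wb*gbd + wc*gcd + wd*gdd)*((1)*wd*gaa)) = 0"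
    unfolding bet_def by (simp add: algebra_simps power2_eq_square)
  have Wz: "(wa*gaa + wb*gab + wc*gac + wd*gad)*((1)*wb*gab + (-2)*wb*gac + (-1)*wd*gad + (-1)*wc*gac + (2)*wa*gcc + (2)*wb*gcc + (-2)*wb*gbc + (-2)*wd*gcd + (-4)*wa*gac) + (wa*gab + wb*gbb + wc*gbc + wd*gbd)*((2)*wb*gac + (-1)*wb*gaa) + (wa*gac + wb*gbc + wc*gcc + wd*gcd)*((2)*wb*gaa + (1)*wc*gaa + (4)*wa*gaa + (2)*wb*gab + (-2)*wb*gac + (-2)*wa*gac + (2)*wd*gad) + (wa*gad + wb*gbd + wc*gcd + wd*gdd)*((1)*wd*gaa) = 0" by (simp only: W mult_zero_left add_0_right add_0)
  have id2: "((2)*wa*wd + (2)*wb*wd + (2)*wc*wd) * (bet gaa gcc gac gad gcd) = (1)*(wb*wb*(gab - gaa)*(gab - gaa)) + (2)*(wb*wc*gaa*gcc) + (2)*(wb*wb*gaa*(- gac)) + (2)*(wa*wb*gaa*(gbc - gbb)) + (2)*(wb*wb*gaa*(gbc - gbb)) + (2)*(wa*wb*gcc*(gab - gaa)) + (2)*(wa*wb*(gaa*gcc - gac^2)) + (2)*(wb*wb*gaa*(gab - gaa)) + (2)*(wb*wb*(gab - gaa)*(- gac)) + (2)*(wa*wa*(gaa*gcc - gac^2)) + (1)*(wd*wd*(gaa*gdd - gad^2)) + (2)*(wb*wb*gcc*(gab - gaa)) + (4)*(wa*wc*(gaa*gcc - gac^2)) + (2)*(wa*wd*(gaa*gcc -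 gac^2)) + (2)*(wb*wc*(gaa*gcc - gac^2)) + (2)*(wb*wd*(gaa*gcc - gac^2)) + (2)*(wc*wd*(gaa*gcc - gac^2)) + (1)*(wc*wc*(gaa*gcc - gac^2)) + (2)*(wa*wb*(gbc - gbb)*(- gac)) + (2)*(wb*wb*(gbc - gbb)*(- gac)) + (1)*(wb*wb*gaa*gbb) + (2)*(wb*wb*gaa*gcc) + (2)*(wb*wc*gcc*(gab - gaa)) + (2)*(wa*wb*gaa*gbb) + (2)*(wb*wd*(- gbd)*(- gac)) + (2)*(wa*wb*gaa*gcc) + (2)*(wa*wb*gbb*(- gac)) + (1)*(wb*wb*gaa*gaa)" using id Wz by linarith
  have p0: "0 < wb*wb*(gab - gaa)*(gab - gaa)" by (intro mult_pos_pos) (use pos a1 nbd nac in auto)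
  have p1: "0 < wb*wc*gaa*gcc" by (intro mult_pos_pos) (use pos a1 nbd nac in auto)
  have p2: "0 < wb*wb*gaa*(- gac)" by (intro mult_pos_pos) (use pos a1 nbd nac in auto)
  have p3: "0 < wa*wb*gaa*(gbc - gbb)" by (intro mult_pos_pos) (use pos a1 nbd nac in auto)
  have p4: "0 < wb*wb*gaa*(gbc - gbb)" by (intro mult_pos_pos) (use pos a1 nbd nac in auto)
  have p5: "0 < wa*wb*gcc*(gab - gaa)" by (intro mult_pos_pos) (use pos a1 nbd nac in auto)
  have p6: "0 \<le> wa*wb*(gaa*gcc - gac^2)" by (intro mult_nonneg_nonneg) (use pos a1 nbd nac m in auto)
  have p7: "0 < wb*wb*gaa*(gab - gaa)" by (intro mult_pos_pos) (use pos a1 nbd nac in auto)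
  have p8: "0 < wb*wb*(gab - gaa)*(- gac)" by (intro mult_pos_pos) (use pos a1 nbd nac in auto)
  have p9: "0 \<le> wa*wa*(gaa*gcc - gac^2)" by (intro mult_nonneg_nonneg) (use pos a1 nbd nac m in auto)
  have p10: "0 \<le> wd*wd*(gaa*gdd - gad^2)" by (intro mult_nonneg_nonneg) (use pos a1 nbd nac m in auto)
  have p11: "0 < wb*wb*gcc*(gab - gaa)" by (intro mult_pos_pos) (use pos a1 nbd nac in auto)
  have p12: "0 \<le> wa*wc*(gaa*gcc - gac^2)" by (intro mult_nonneg_nonneg) (use pos a1 nbd nac m in auto)
  have p13: "0 \<le> wa*wd*(gaa*gcc - gac^2)" by (intro mult_nonneg_nonneg) (use pos a1 nbd nac m in auto)
  have p14: "0 \<le> wb*wc*(gaa*gcc - gac^2)" by (intro mult_nonneg_nonneg) (use pos a1 nbd nac m in auto)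
  have p15: "0 \<le> wb*wd*(gaa*gcc - gac^2)" by (intro mult_nonneg_nonneg) (use pos a1 nbd nac m in auto)
  have p16: "0 \<le> wc*wd*(gaa*gcc - gac^2)" by (intro mult_nonneg_nonneg) (use pos a1 nbd nac m in auto)
  have p17: "0 \<le> wc*wc*(gaa*gcc - gac^2)" by (intro mult_nonneg_nonneg) (use pos a1 nbd nac m in auto)
  have p18: "0 < wa*wb*(gbc - gbb)*(- gac)" by (intro mult_pos_pos) (use pos a1 nbd nac in auto)
  have p19: "0 < wb*wb*(gbc - gbb)*(- gac)" by (intro mult_pos_pos) (use pos a1 nbd nac in auto)
  have p20: "0 < wb*wb*gaa*gbb" by (intro mult_pos_pos) (use pos a1 nbd nac in auto)
  have p21: "0 < wb*wb*gaa*gcc" by (intro mult_pos_pos) (use pos a1 nbd nac in auto)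
  have p22: "0 < wb*wc*gcc*(gab - gaa)" by (intro mult_pos_pos) (use pos a1 nbd nac in auto)
  have p23: "0 < wa*wb*gaa*gbb" by (intro mult_pos_pos) (use pos a1 nbd nac in auto)
  have p24: "0 < wb*wd*(- gbd)*(- gac)" by (intro mult_pos_pos) (use pos a1 nbd nac in auto)
  have p25: "0 < wa*wb*gaa*gcc" by (intro mult_pos_pos) (use pos a1 nbd nac in auto)
  have p26: "0 < wa*wb*gbb*(- gac)" by (intro mult_pos_pos) (use pos a1 nbd nac in auto)
  have p27: "0 < wb*wb*gaa*gaa" by (intro mult_pos_pos) (use pos a1 nbd nac in auto)
  have Mpos: "0 < (2)*wa*wd + (2)*wb*wd + (2)*wc*wd" using pos by (simp add: mult_pos_pos add_pos_pos)
  have "0 < ((2)*wa*wd + (2)*wb*wd + (2)*wc*wd) * (bet gaa gcc gac gad gcd)" unfolding id2 using p0 p1 p2 p3 p4 p5 p6 p7 p8 p9 p10 p11 p12 p13 p14 p15 p16 p17 p18 p19 p20 p21 p22 p23 p24 p25 p26 p27 by linarith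
  thus ?thesis using Mpos by (simp add: zero_less_mult_iff)
qed

lemma lstar_dc_acd_cd:
  fixes gaa gbb gcc gdd gab gac gad gbc gbd gcd wa wb wc wd :: real
  assumes W: "wa*gaa + wb*gab + wc*gac + wd*gad = 0" "wa*gab + wb*gbb + wc*gbc + wd*gbd = 0"
    "wa*gac + wb*gbc + wc*gcc + wd*gcd = 0" "wa*gad + wb*gbd + wc*gcd + wd*gdd = 0"
  and pos: "0 < wa" "0 < wb" "0 < wc" "0 < wd" "0 < gaa" "0 < gbb" "0 < gcc" "0 < gdd"
  and arcs: "gab > gaa" "gbc > gbb" "gcd > gdd"
  and CS: "gab^2 \<le> gaa*gbb" "gac^2 \<le> gaa*gcc" "gad^2 \<le> gaa*gdd" "gbc^2 \<le> gbb*gcc" "gbd^2 \<le> gbb*gdd" "gcd^2 \<le> gcc*gdd"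
  shows "0 < bet gcc gdd gcd gac gad"
proof -
  have nbd: "0 < - gbd" using lstar_nbd[OF W(2) pos(1-4) pos(5,6) arcs(1,2)] .
  have gcdpos: "0 < gcd" using arcs(3) pos by linarith
  have nac: "0 < - gac" using lstar_nac[OF W(3) pos(1-4) pos(6,7) arcs(2) gcdpos] .
  have a1: "0 < gab - gaa" "0 < gbc - gbb" "0 < gcd - gdd" using arcs by auto
  have m: "0 \<le> gaa*gbb - gab^2" "0 \<le> gaa*gcc - gac^2" "0 \<le> gaa*gdd - gad^2" "0 \<le> gbb*gcc - gbc^2" "0 \<le> gbb*gdd - gbd^2" "0 \<le> gcc*gdd - gcd^2" using CS by auto
  have id: "((1)*wa*wd) * (bet gcc gdd gcd gac gad) - ((1)*(wa*wa*(gaa*gcc - gac^2)) + (1)*(wa*wb*gcc*(gab - gaa)) + (1)*(wa*wb*gaa*gcc) + (1)*(wb*wd*(gcd - gdd)*(- gbd)) + (1)*(wb*wd*gdd*(gbc - gbb)) + (1)*(wa*wb*gbb*(- gac)) + (1)*(wa*wb*(gbc - gbb)*(- gac)) + (1)*(wb*wd*gbb*gdd) + (1)*(wb*wd*gdd*(- gbd)) + (1)*(wa*wd*(gcc*gdd - gcd^2)) + (1)*(wc*wd*(gcc*gdd - gcd^2))) + ((wa*gaa + wb*gab + wc*gac + wd*gad)*((1)*wa*gcc) + (wa*gab + wb*gbb + wc*gbc + wd*gbd)*(0) + (wa*gac + wb*gbc + wc*gcc + wd*gcd)*((-1)*wc*gcd + (-1)*wa*gac + (-1)*wa*gad + (-1)*wb*gbd)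 + (wa*gad + wb*gbd + wc*gcd + wd*gdd)*((1)*wa*gac + (1)*wb*gbc + (1)*wc*gcc)) = 0"
    unfolding bet_def by (simp add: algebra_simps power2_eq_square)
  have Wz: "(wa*gaa + wb*gab + wc*gac + wd*gad)*((1)*wa*gcc) + (wa*gab + wb*gbb + wc*gbc + wd*gbd)*(0) + (wa*gac + wb*gbc + wc*gcc + wd*gcd)*((-1)*wc*gcd + (-1)*wa*gac + (-1)*wa*gad + (-1)*wb*gbd) + (wa*gad + wb*gbd + wc*gcd + wd*gdd)*((1)*wa*gac + (1)*wb*gbc + (1)*wc*gcc) = 0" by (simp only: W mult_zero_left add_0_right add_0)
  have id2: "((1)*wa*wd) * (bet gcc gdd gcd gac gad) = (1)*(wa*wa*(gaa*gcc - gac^2)) + (1)*(wa*wb*gcc*(gab - gaa)) + (1)*(wa*wb*gaa*gcc) + (1)*(wb*wd*(gcd - gdd)*(- gbd)) + (1)*(wb*wd*gdd*(gbc - gbb)) + (1)*(wa*wb*gbb*(- gac)) + (1)*(wa*wb*(gbc - gbb)*(- gac)) + (1)*(wb*wd*gbb*gdd) + (1)*(wb*wd*gdd*(- gbd)) + (1)*(wa*wd*(gcc*gdd - gcd^2)) + (1)*(wc*wd*(gcc*gdd - gcd^2))" using id Wz by linarith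
  have p0: "0 \<le> wa*wa*(gaa*gcc - gac^2)" by (intro mult_nonneg_nonneg) (use pos a1 nbd nac m in auto)
  have p1: "0 < wa*wb*gcc*(gab - gaa)" by (intro mult_pos_pos) (use pos a1 nbd nac in auto)
  have p2: "0 < wa*wb*gaa*gcc" by (intro mult_pos_pos) (use pos a1 nbd nac in auto)
  have p3: "0 < wb*wd*(gcd - gdd)*(- gbd)" by (intro mult_pos_pos) (use pos a1 nbd nac in auto)
  have p4: "0 < wb*wd*gdd*(gbc - gbb)" by (intro mult_pos_pos) (use pos a1 nbd nac in auto)
  have p5: "0 < wa*wb*gbb*(- gac)" by (intro mult_pos_pos) (use pos a1 nbd nac in auto)
  have p6: "0 < wa*wb*(gbc - gbb)*(- gac)" by (intro mult_pos_pos) (use pos a1 nbd nac in auto)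
  have p7: "0 < wb*wd*gbb*gdd" by (intro mult_pos_pos) (use pos a1 nbd nac in auto)
  have p8: "0 < wb*wd*gdd*(- gbd)" by (intro mult_pos_pos) (use pos a1 nbd nac in auto)
  have p9: "0 \<le> wa*wd*(gcc*gdd - gcd^2)" by (intro mult_nonneg_nonneg) (use pos a1 nbd nac m in auto)
  have p10: "0 \<le> wc*wd*(gcc*gdd - gcd^2)" by (intro mult_nonneg_nonneg) (use pos a1 nbd nac m in auto)
  have Mpos: "0 < (1)*wa*wd" using pos by (simp add: mult_pos_pos add_pos_pos)
  have "0 < ((1)*wa*wd) * (bet gcc gdd gcd gac gad)" unfolding id2 using p0 p1 p2 p3 p4 p5 p6 p7 p8 p9 p10 by linarith
  thus ?thesis using Mpos by (simp add: zero_less_mult_iff)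
qed

lemma lstar_dc_acd_ad:
  fixes gaa gbb gcc gdd gab gac gad gbc gbd gcd wa wb wc wd :: real
  assumes W: "wa*gaa + wb*gab + wc*gac + wd*gad = 0" "wa*gab + wb*gbb + wc*gbc + wd*gbd = 0"
    "wa*gac + wb*gbc + wc*gcc + wd*gcd = 0" "wa*gad + wb*gbd + wc*gcd + wd*gdd = 0"
  and pos: "0 < wa" "0 < wb" "0 < wc" "0 < wd" "0 < gaa" "0 < gbb" "0 < gcc" "0 < gdd"
  and arcs: "gab > gaa" "gbc > gbb" "gcd > gdd"
  and CS: "gab^2 \<le> gaa*gbb" "gac^2 \<le> gaa*gcc" "gad^2 \<le> gaa*gdd" "gbc^2 \<le> gbb*gcc" "gbd^2 \<le> gbb*gdd" "gcd^2 \<le> gcc*gdd"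
  shows "0 < bet gaa gdd gad gac gcd"
proof -
  have nbd: "0 < - gbd" using lstar_nbd[OF W(2) pos(1-4) pos(5,6) arcs(1,2)] .
  have gcdpos: "0 < gcd" using arcs(3) pos by linarith
  have nac: "0 < - gac" using lstar_nac[OF W(3) pos(1-4) pos(6,7) arcs(2) gcdpos] .
  have a1: "0 < gab - gaa" "0 < gbc - gbb" "0 < gcd - gdd" using arcs by auto
  have m: "0 \<le> gaa*gbb - gab^2" "0 \<le> gaa*gcc - gac^2" "0 \<le> gaa*gdd - gad^2" "0 \<le> gbb*gcc - gbc^2" "0 \<le> gbb*gdd - gbd^2" "0 \<le> gcc*gdd - gcd^2" using CS by auto
  have id: "((1)*wa*wd) * (bet gaa gdd gad gac gcd) - ((1)*(wa*wb*(gab - gaa)*(- gac)) + (1)*(wa*wc*(gaa*gcc - gac^2)) + (1)*(wa*wb*gaa*(gbc - gbb)) + (1)*(wa*wb*gaa*(- gac)) + (1)*(wb*wd*(gcd - gdd)*(- gbd)) + (1)*(wa*wd*(gaa*gdd - gad^2)) + (1)*(wa*wb*gaa*gbb) + (1)*(wb*wd*gdd*(gbc - gbb)) + (1)*(wb*wd*gdd*(- gbd)) + (1)*(wb*wd*gbb*gdd) + (1)*(wc*wd*(gcc*gdd - gcd^2))) + ((wa*gaa + wb*gab + wc*gac + wd*gad)*((-1)*wa*gac) + (wa*gab + wb*gbb + wc*gbc + wd*gbd)*(0) + (wa*gac + wb*gbc + wc*gcc + wd*gcd)*((1)*wa*gaa + (-1)*wb*gbd + (-1)*wc*gcd + (-1)*wa*gad)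 + (wa*gad + wb*gbd + wc*gcd + wd*gdd)*((1)*wa*gac + (1)*wb*gbc + (1)*wc*gcc)) = 0"
    unfolding bet_def by (simp add: algebra_simps power2_eq_square)
  have Wz: "(wa*gaa + wb*gab + wc*gac + wd*gad)*((-1)*wa*gac) + (wa*gab + wb*gbb + wc*gbc + wd*gbd)*(0) + (wa*gac + wb*gbc + wc*gcc + wd*gcd)*((1)*wa*gaa + (-1)*wb*gbd + (-1)*wc*gcd + (-1)*wa*gad) + (wa*gad + wb*gbd + wc*gcd + wd*gdd)*((1)*wa*gac + (1)*wb*gbc + (1)*wc*gcc) = 0" by (simp only: W mult_zero_left add_0_right add_0)
  have id2: "((1)*wa*wd) * (bet gaa gdd gad gac gcd) = (1)*(wa*wb*(gab - gaa)*(- gac)) + (1)*(wa*wc*(gaa*gcc - gac^2)) + (1)*(wa*wb*gaa*(gbc - gbb)) + (1)*(wa*wb*gaa*(- gac)) + (1)*(wb*wd*(gcd - gdd)*(- gbd)) + (1)*(wa*wd*(gaa*gdd - gad^2)) + (1)*(wa*wb*gaa*gbb) + (1)*(wb*wd*gdd*(gbc - gbb)) + (1)*(wb*wd*gdd*(- gbd)) + (1)*(wb*wd*gbb*gdd) + (1)*(wc*wd*(gcc*gdd - gcd^2))" using id Wz by linarith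
  have p0: "0 < wa*wb*(gab - gaa)*(- gac)" by (intro mult_pos_pos) (use pos a1 nbd nac in auto)
  have p1: "0 \<le> wa*wc*(gaa*gcc - gac^2)" by (intro mult_nonneg_nonneg) (use pos a1 nbd nac m in auto)
  have p2: "0 < wa*wb*gaa*(gbc - gbb)" by (intro mult_pos_pos) (use pos a1 nbd nac in auto)
  have p3: "0 < wa*wb*gaa*(- gac)" by (intro mult_pos_pos) (use pos a1 nbd nac in auto)
  have p4: "0 < wb*wd*(gcd - gdd)*(- gbd)" by (intro mult_pos_pos) (use pos a1 nbd nac in auto)
  have p5: "0 \<le> wa*wd*(gaa*gdd - gad^2)" by (intro mult_nonneg_nonneg) (use pos a1 nbd nac m in auto)
  have p6: "0 < wa*wb*gaa*gbb" by (intro mult_pos_pos) (use pos a1 nbd nac in auto)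
  have p7: "0 < wb*wd*gdd*(gbc - gbb)" by (intro mult_pos_pos) (use pos a1 nbd nac in auto)
  have p8: "0 < wb*wd*gdd*(- gbd)" by (intro mult_pos_pos) (use pos a1 nbd nac in auto)
  have p9: "0 < wb*wd*gbb*gdd" by (intro mult_pos_pos) (use pos a1 nbd nac in auto)
  have p10: "0 \<le> wc*wd*(gcc*gdd - gcd^2)" by (intro mult_nonneg_nonneg) (use pos a1 nbd nac m in auto)
  have Mpos: "0 < (1)*wa*wd" using pos by (simp add: mult_pos_pos add_pos_pos)
  have "0 < ((1)*wa*wd) * (bet gaa gdd gad gac gcd)" unfolding id2 using p0 p1 p2 p3 p4 p5 p6 p7 p8 p9 p10 by linarith
  thus ?thesis using Mpos by (simp add: zero_less_mult_iff)
qed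

lemma lstar_cd_abd_ab:
  fixes gaa gbb gcc gdd gab gac gad gbc gbd gcd wa wb wc wd :: real
  assumes W: "wa*gaa + wb*gab + wc*gac + wd*gad = 0" "wa*gab + wb*gbb + wc*gbc + wd*gbd = 0"
    "wa*gac + wb*gbc + wc*gcc + wd*gcd = 0" "wa*gad + wb*gbd + wc*gcd + wd*gdd = 0"
  and pos: "0 < wa" "0 < wb" "0 < wc" "0 < wd" "0 < gaa" "0 < gbb" "0 < gcc" "0 < gdd"
  and arcs: "gab > gaa" "gbc > gbb" "gcd > gcc"
  and CS: "gab^2 \<le> gaa*gbb" "gac^2 \<le> gaa*gcc" "gad^2 \<le> gaa*gdd" "gbc^2 \<le> gbb*gcc" "gbd^2 \<le> gbb*gdd" "gcd^2 \<le> gcc*gdd"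
  shows "0 < bet gaa gbb gab gad gbd"
proof -
  have nbd: "0 < - gbd" using lstar_nbd[OF W(2) pos(1-4) pos(5,6) arcs(1,2)] .
  have gcdpos: "0 < gcd" using arcs(3) pos by linarith
  have nac: "0 < - gac" using lstar_nac[OF W(3) pos(1-4) pos(6,7) arcs(2) gcdpos] .
  have a1: "0 < gab - gaa" "0 < gbc - gbb" "0 < gcd - gcc" using arcs by auto
  have m: "0 \<le> gaa*gbb - gab^2" "0 \<le> gaa*gcc - gac^2" "0 \<le> gaa*gdd - gad^2" "0 \<le> gbb*gcc - gbc^2" "0 \<le> gbb*gdd - gbd^2" "0 \<le> gcc*gdd - gcd^2" using CS by auto
  have id: "((1)*wa*wd) * (bet gaa gbb gab gad gbd) - ((1)*(wa*wc*(gab - gaa)*(- gac)) + (1)*(wa*wb*(gaa*gbb - gab^2)) + (1)*(wa*wd*(gaa*gbb - gab^2)) + (1)*(wa*wc*gaa*(gbc - gbb)) + (1)*(wa*wc*gaa*(- gac)) + (1)*(wa*wc*gaa*gbb) + (1)*(wc*wd*gbb*(- gbd)) + (1)*(wc*wd*gbb*(gcd - gcc)) + (1)*(wc*wd*gbb*gcc) + (1)*(wc*wd*(gbc - gbb)*(- gbd)) + (1)*(wd*wd*(gbb*gdd - gbd^2))) + ((wa*gaa + wb*gab + wc*gac + wd*gad)*((-1)*wa*gab) + (wa*gab + wb*gbb + wc*gbc + wd*gbd)*((1)*wa*gaa + (-1)*wd*gbd) + (wa*gac + wb*gbc + wc*gcc + wd*gcd)*(0) + (wa*gad + wb*gbd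 + wc*gcd + wd*gdd)*((1)*wd*gbb)) = 0"
    unfolding bet_def by (simp add: algebra_simps power2_eq_square)
  have Wz: "(wa*gaa + wb*gab + wc*gac + wd*gad)*((-1)*wa*gab) + (wa*gab + wb*gbb + wc*gbc + wd*gbd)*((1)*wa*gaa + (-1)*wd*gbd) + (wa*gac + wb*gbc + wc*gcc + wd*gcd)*(0) + (wa*gad + wb*gbd + wc*gcd + wd*gdd)*((1)*wd*gbb) = 0" by (simp only: W mult_zero_left add_0_right add_0)
  have id2: "((1)*wa*wd) * (bet gaa gbb gab gad gbd) = (1)*(wa*wc*(gab - gaa)*(- gac)) + (1)*(wa*wb*(gaa*gbb - gab^2)) + (1)*(wa*wd*(gaa*gbb - gab^2)) + (1)*(wa*wc*gaa*(gbc - gbb)) + (1)*(wa*wc*gaa*(- gac)) + (1)*(wa*wc*gaa*gbb) + (1)*(wc*wd*gbb*(- gbd)) + (1)*(wc*wd*gbb*(gcd - gcc)) + (1)*(wc*wd*gbb*gcc) + (1)*(wc*wd*(gbc - gbb)*(- gbd)) + (1)*(wd*wd*(gbb*gdd - gbd^2))" using id Wz by linarith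
  have p0: "0 < wa*wc*(gab - gaa)*(- gac)" by (intro mult_pos_pos) (use pos a1 nbd nac in auto)
  have p1: "0 \<le> wa*wb*(gaa*gbb - gab^2)" by (intro mult_nonneg_nonneg) (use pos a1 nbd nac m in auto)
  have p2: "0 \<le> wa*wd*(gaa*gbb - gab^2)" by (intro mult_nonneg_nonneg) (use pos a1 nbd nac m in auto)
  have p3: "0 < wa*wc*gaa*(gbc - gbb)" by (intro mult_pos_pos) (use pos a1 nbd nac in auto)
  have p4: "0 < wa*wc*gaa*(- gac)" by (intro mult_pos_pos) (use pos a1 nbd nac in auto)
  have p5: "0 < wa*wc*gaa*gbb" by (intro mult_pos_pos) (use pos a1 nbd nac in auto)
  have p6: "0 < wc*wd*gbb*(- gbd)" by (intro mult_pos_pos) (use pos a1 nbd nac in auto)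
  have p7: "0 < wc*wd*gbb*(gcd - gcc)" by (intro mult_pos_pos) (use pos a1 nbd nac in auto)
  have p8: "0 < wc*wd*gbb*gcc" by (intro mult_pos_pos) (use pos a1 nbd nac in auto)
  have p9: "0 < wc*wd*(gbc - gbb)*(- gbd)" by (intro mult_pos_pos) (use pos a1 nbd nac in auto)
  have p10: "0 \<le> wd*wd*(gbb*gdd - gbd^2)" by (intro mult_nonneg_nonneg) (use pos a1 nbd nac m in auto)
  have Mpos: "0 < (1)*wa*wd" using pos by (simp add: mult_pos_pos add_pos_pos)
  have "0 < ((1)*wa*wd) * (bet gaa gbb gab gad gbd)" unfolding id2 using p0 p1 p2 p3 p4 p5 p6 p7 p8 p9 p10 by linarith
  thus ?thesis using Mpos by (simp add: zero_less_mult_iff)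
qed

lemma lstar_cd_abd_bd:
  fixes gaa gbb gcc gdd gab gac gad gbc gbd gcd wa wb wc wd :: real
  assumes W: "wa*gaa + wb*gab + wc*gac + wd*gad = 0" "wa*gab + wb*gbb + wc*gbc + wd*gbd = 0"
    "wa*gac + wb*gbc + wc*gcc + wd*gcd = 0" "wa*gad + wb*gbd + wc*gcd + wd*gdd = 0"
  and pos: "0 < wa" "0 < wb" "0 < wc" "0 < wd" "0 < gaa" "0 < gbb" "0 < gcc" "0 < gdd"
  and arcs: "gab > gaa" "gbc > gbb" "gcd > gcc"
  and CS: "gab^2 \<le> gaa*gbb" "gac^2 \<le> gaa*gcc" "gad^2 \<le> gaa*gdd" "gbc^2 \<le> gbb*gcc" "gbd^2 \<le> gbb*gdd" "gcd^2 \<le> gcc*gdd"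
  shows "0 < bet gbb gdd gbd gab gad"
proof -
  have nbd: "0 < - gbd" using lstar_nbd[OF W(2) pos(1-4) pos(5,6) arcs(1,2)] .
  have gcdpos: "0 < gcd" using arcs(3) pos by linarith
  have nac: "0 < - gac" using lstar_nac[OF W(3) pos(1-4) pos(6,7) arcs(2) gcdpos] .
  have a1: "0 < gab - gaa" "0 < gbc - gbb" "0 < gcd - gcc" using arcs by auto
  have m: "0 \<le> gaa*gbb - gab^2" "0 \<le> gaa*gcc - gac^2" "0 \<le> gaa*gdd - gad^2" "0 \<le> gbb*gcc - gbc^2" "0 \<le> gbb*gdd - gbd^2" "0 \<le> gcc*gdd - gcd^2" using CS by auto
  have id: "((1)*wa*wa) * (bet gbb gdd gbd gab gad) - ((1)*(wa*wc*gbb*gdd) + (1)*(wa*wc*gbb*(- gbd)) + (1)*(wa*wc*gbb*(gcd - gcc)) + (1)*(wa*wc*gcc*(- gbd)) + (1)*(wa*wc*gdd*(gbc - gbb)) + (1)*(wa*wc*gbb*gcc) + (1)*(wa*wd*(gbb*gdd - gbd^2)) + (1)*(wa*wb*(gbb*gdd - gbd^2)) + (1)*(wa*wc*(gbc - gbb)*(- gbd)) + (1)*(wa*wa*(gbb*gdd - gbd^2)) + (1)*(wa*wc*(gcd - gcc)*(- gbd))) + ((wa*gaa + wb*gab + wc*gac + wd*gad)*(0) + (wa*gab + wb*gbb + wc*gbc + wd*gbd)*((1)*wa*gdd + (-1)*wa*gbd) + (wa*gac + wb*gbc + wc*gcc + wd*gcd)*(0) + (wa*gad + wb*gbd + wc*gcd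 + wd*gdd)*((-1)*wa*gbd + (1)*wa*gbb)) = 0"
    unfolding bet_def by (simp add: algebra_simps power2_eq_square)
  have Wz: "(wa*gaa + wb*gab + wc*gac + wd*gad)*(0) + (wa*gab + wb*gbb + wc*gbc + wd*gbd)*((1)*wa*gdd + (-1)*wa*gbd) + (wa*gac + wb*gbc + wc*gcc + wd*gcd)*(0) + (wa*gad + wb*gbd + wc*gcd + wd*gdd)*((-1)*wa*gbd + (1)*wa*gbb) = 0" by (simp only: W mult_zero_left add_0_right add_0)
  have id2: "((1)*wa*wa) * (bet gbb gdd gbd gab gad) = (1)*(wa*wc*gbb*gdd) + (1)*(wa*wc*gbb*(- gbd)) + (1)*(wa*wc*gbb*(gcd - gcc)) + (1)*(wa*wc*gcc*(- gbd)) + (1)*(wa*wc*gdd*(gbc - gbb)) + (1)*(wa*wc*gbb*gcc) + (1)*(wa*wd*(gbb*gdd - gbd^2)) + (1)*(wa*wb*(gbb*gdd - gbd^2)) + (1)*(wa*wc*(gbc - gbb)*(- gbd)) + (1)*(wa*wa*(gbb*gdd - gbd^2)) + (1)*(wa*wc*(gcd - gcc)*(- gbd))" using id Wz by linarith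
  have p0: "0 < wa*wc*gbb*gdd" by (intro mult_pos_pos) (use pos a1 nbd nac in auto)
  have p1: "0 < wa*wc*gbb*(- gbd)" by (intro mult_pos_pos) (use pos a1 nbd nac in auto)
  have p2: "0 < wa*wc*gbb*(gcd - gcc)" by (intro mult_pos_pos) (use pos a1 nbd nac in auto)
  have p3: "0 < wa*wc*gcc*(- gbd)" by (intro mult_pos_pos) (use pos a1 nbd nac in auto)
  have p4: "0 < wa*wc*gdd*(gbc - gbb)" by (intro mult_pos_pos) (use pos a1 nbd nac in auto)
  have p5: "0 < wa*wc*gbb*gcc" by (intro mult_pos_pos) (use pos a1 nbd nac in auto)
  have p6: "0 \<le> wa*wd*(gbb*gdd - gbd^2)" by (intro mult_nonneg_nonneg) (use pos a1 nbd nac m in auto)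
  have p7: "0 \<le> wa*wb*(gbb*gdd - gbd^2)" by (intro mult_nonneg_nonneg) (use pos a1 nbd nac m in auto)
  have p8: "0 < wa*wc*(gbc - gbb)*(- gbd)" by (intro mult_pos_pos) (use pos a1 nbd nac in auto)
  have p9: "0 \<le> wa*wa*(gbb*gdd - gbd^2)" by (intro mult_nonneg_nonneg) (use pos a1 nbd nac m in auto)
  have p10: "0 < wa*wc*(gcd - gcc)*(- gbd)" by (intro mult_pos_pos) (use pos a1 nbd nac in auto)
  have Mpos: "0 < (1)*wa*wa" using pos by (simp add: mult_pos_pos add_pos_pos)
  have "0 < ((1)*wa*wa) * (bet gbb gdd gbd gab gad)" unfolding id2 using p0 p1 p2 p3 p4 p5 p6 p7 p8 p9 p10 by linarith
  thus ?thesis using Mpos by (simp add: zero_less_mult_iff)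
qed

lemma lstar_cd_abd_ad:
  fixes gaa gbb gcc gdd gab gac gad gbc gbd gcd wa wb wc wd :: real
  assumes W: "wa*gaa + wb*gab + wc*gac + wd*gad = 0" "wa*gab + wb*gbb + wc*gbc + wd*gbd = 0"
    "wa*gac + wb*gbc + wc*gcc + wd*gcd = 0" "wa*gad + wb*gbd + wc*gcd + wd*gdd = 0"
  and pos: "0 < wa" "0 < wb" "0 < wc" "0 < wd" "0 < gaa" "0 < gbb" "0 < gcc" "0 < gdd"
  and arcs: "gab > gaa" "gbc > gbb" "gcd > gcc"
  and CS: "gab^2 \<le> gaa*gbb" "gac^2 \<le> gaa*gcc" "gad^2 \<le> gaa*gdd" "gbc^2 \<le> gbb*gcc" "gbd^2 \<le> gbb*gdd" "gcd^2 \<le> gcc*gdd"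
  shows "0 < bet gaa gdd gad gab gbd"
proof -
  have nbd: "0 < - gbd" using lstar_nbd[OF W(2) pos(1-4) pos(5,6) arcs(1,2)] .
  have gcdpos: "0 < gcd" using arcs(3) pos by linarith
  have nac: "0 < - gac" using lstar_nac[OF W(3) pos(1-4) pos(6,7) arcs(2) gcdpos] .
  have a1: "0 < gab - gaa" "0 < gbc - gbb" "0 < gcd - gcc" using arcs by auto
  have m: "0 \<le> gaa*gbb - gab^2" "0 \<le> gaa*gcc - gac^2" "0 \<le> gaa*gdd - gad^2" "0 \<le> gbb*gcc - gbc^2" "0 \<le> gbb*gdd - gbd^2" "0 \<le> gcc*gdd - gcd^2" using CS by auto
  have id: "((1)*wa*wd) * (bet gaa gdd gad gab gbd) - ((1)*(wa*wc*(gab - gaa)*(- gac)) + (1)*(wa*wd*(gaa*gdd - gad^2)) + (1)*(wa*wb*(gaa*gbb - gab^2)) + (1)*(wa*wc*gaa*(gbc - gbb)) + (1)*(wa*wc*gaa*gbb) + (1)*(wa*wc*gaa*(- gac)) + (1)*(wc*wd*gcc*(- gbd)) + (1)*(wc*wd*gdd*(gbc - gbb)) + (1)*(wb*wd*(gbb*gdd - gbd^2)) + (1)*(wc*wd*(gcd - gcc)*(- gbd)) + (1)*(wc*wd*gbb*gdd)) + ((wa*gaa + wb*gab + wc*gac + wd*gad)*((-1)*wa*gab) + (wa*gab + wb*gbb + wc*gbc + wd*gbd)*((1)*wa*gaa + (-1)*wa*gad + (-1)*wc*gcd + (-1)*wb*gbd) + (wa*gac + wb*gbc + wc*gcc + wd*gcd)*(0)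 + (wa*gad + wb*gbd + wc*gcd + wd*gdd)*((1)*wa*gab + (1)*wb*gbb + (1)*wc*gbc)) = 0"
    unfolding bet_def by (simp add: algebra_simps power2_eq_square)
  have Wz: "(wa*gaa + wb*gab + wc*gac + wd*gad)*((-1)*wa*gab) + (wa*gab + wb*gbb + wc*gbc + wd*gbd)*((1)*wa*gaa + (-1)*wa*gad + (-1)*wc*gcd + (-1)*wb*gbd) + (wa*gac + wb*gbc + wc*gcc + wd*gcd)*(0) + (wa*gad + wb*gbd + wc*gcd + wd*gdd)*((1)*wa*gab + (1)*wb*gbb + (1)*wc*gbc) = 0" by (simp only: W mult_zero_left add_0_right add_0)
  have id2: "((1)*wa*wd) * (bet gaa gdd gad gab gbd) = (1)*(wa*wc*(gab - gaa)*(- gac)) + (1)*(wa*wd*(gaa*gdd - gad^2)) + (1)*(wa*wb*(gaa*gbb - gab^2)) + (1)*(wa*wc*gaa*(gbc - gbb)) + (1)*(wa*wc*gaa*gbb) + (1)*(wa*wc*gaa*(- gac)) + (1)*(wc*wd*gcc*(- gbd)) + (1)*(wc*wd*gdd*(gbc - gbb)) + (1)*(wb*wd*(gbb*gdd - gbd^2)) + (1)*(wc*wd*(gcd - gcc)*(- gbd)) + (1)*(wc*wd*gbb*gdd)" using id Wz by linarith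
  have p0: "0 < wa*wc*(gab - gaa)*(- gac)" by (intro mult_pos_pos) (use pos a1 nbd nac in auto)
  have p1: "0 \<le> wa*wd*(gaa*gdd - gad^2)" by (intro mult_nonneg_nonneg) (use pos a1 nbd nac m in auto)
  have p2: "0 \<le> wa*wb*(gaa*gbb - gab^2)" by (intro mult_nonneg_nonneg) (use pos a1 nbd nac m in auto)
  have p3: "0 < wa*wc*gaa*(gbc - gbb)" by (intro mult_pos_pos) (use pos a1 nbd nac in auto)
  have p4: "0 < wa*wc*gaa*gbb" by (intro mult_pos_pos) (use pos a1 nbd nac in auto)
  have p5: "0 < wa*wc*gaa*(- gac)" by (intro mult_pos_pos) (use pos a1 nbd nac in auto)
  have p6: "0 < wc*wd*gcc*(- gbd)" by (intro mult_pos_pos) (use pos a1 nbd nac in auto)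
  have p7: "0 < wc*wd*gdd*(gbc - gbb)" by (intro mult_pos_pos) (use pos a1 nbd nac in auto)
  have p8: "0 \<le> wb*wd*(gbb*gdd - gbd^2)" by (intro mult_nonneg_nonneg) (use pos a1 nbd nac m in auto)
  have p9: "0 < wc*wd*(gcd - gcc)*(- gbd)" by (intro mult_pos_pos) (use pos a1 nbd nac in auto)
  have p10: "0 < wc*wd*gbb*gdd" by (intro mult_pos_pos) (use pos a1 nbd nac in auto)
  have Mpos: "0 < (1)*wa*wd" using pos by (simp add: mult_pos_pos add_pos_pos)
  have "0 < ((1)*wa*wd) * (bet gaa gdd gad gab gbd)" unfolding id2 using p0 p1 p2 p3 p4 p5 p6 p7 p8 p9 p10 by linarith
  thus ?thesis using Mpos by (simp add: zero_less_mult_iff)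
qed

lemma lstar_cd_acd_ac:
  fixes gaa gbb gcc gdd gab gac gad gbc gbd gcd wa wb wc wd :: real
  assumes W: "wa*gaa + wb*gab + wc*gac + wd*gad = 0" "wa*gab + wb*gbb + wc*gbc + wd*gbd = 0"
    "wa*gac + wb*gbc + wc*gcc + wd*gcd = 0" "wa*gad + wb*gbd + wc*gcd + wd*gdd = 0"
  and pos: "0 < wa" "0 < wb" "0 < wc" "0 < wd" "0 < gaa" "0 < gbb" "0 < gcc" "0 < gdd"
  and arcs: "gab > gaa" "gbc > gbb" "gcd > gcc"
  and CS: "gab^2 \<le> gaa*gbb" "gac^2 \<le> gaa*gcc" "gad^2 \<le> gaa*gdd" "gbc^2 \<le> gbb*gcc" "gbd^2 \<le> gbb*gdd" "gcd^2 \<le> gcc*gdd"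
  shows "0 < bet gaa gcc gac gad gcd"
proof -
  have nbd: "0 < - gbd" using lstar_nbd[OF W(2) pos(1-4) pos(5,6) arcs(1,2)] .
  have gcdpos: "0 < gcd" using arcs(3) pos by linarith
  have nac: "0 < - gac" using lstar_nac[OF W(3) pos(1-4) pos(6,7) arcs(2) gcdpos] .
  have a1: "0 < gab - gaa" "0 < gbc - gbb" "0 < gcd - gcc" using arcs by auto
  have m: "0 \<le> gaa*gbb - gab^2" "0 \<le> gaa*gcc - gac^2" "0 \<le> gaa*gdd - gad^2" "0 \<le> gbb*gcc - gbc^2" "0 \<le> gbb*gdd - gbd^2" "0 \<le> gcc*gdd - gcd^2" using CS by auto
  have id: "((2)*wa*wd + (2)*wb*wd + (2)*wc*wd) * (bet gaa gcc gac gad gcd) - ((1)*(wb*wb*(gab - gaa)*(gab - gaa)) + (2)*(wb*wc*gaa*gcc) + (2)*(wb*wb*gaa*(- gac)) + (2)*(wa*wb*gaa*(gbc - gbb)) + (2)*(wb*wb*gaa*(gbc - gbb)) + (2)*(wa*wb*gcc*(gab - gaa)) + (2)*(wa*wb*(gaa*gcc - gac^2)) + (2)*(wb*wb*gaa*(gab - gaa)) + (2)*(wb*wb*(gab - gaa)*(- gac)) + (2)*(wa*wa*(gaa*gcc - gac^2)) + (1)*(wd*wd*(gaa*gdd - gad^2)) + (2)*(wb*wb*gcc*(gab - gaa)) + (4)*(wa*wc*(gaa*gcc - gac^2)) + (2)*(wa*wd*(gaa*gcc - gac^2)) + (2)*(wb*wc*(gaa*gcc - gac^2)) + (2)*(wb*wd*(gaa*gcc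 - gac^2)) + (2)*(wc*wd*(gaa*gcc - gac^2)) + (1)*(wc*wc*(gaa*gcc - gac^2)) + (2)*(wa*wb*(gbc - gbb)*(- gac)) + (2)*(wb*wb*(gbc - gbb)*(- gac)) + (1)*(wb*wb*gaa*gbb) + (2)*(wb*wb*gaa*gcc) + (2)*(wb*wc*gcc*(gab - gaa)) + (2)*(wa*wb*gaa*gbb) + (2)*(wb*wd*(- gbd)*(- gac)) + (2)*(wa*wb*gaa*gcc) + (2)*(wa*wb*gbb*(- gac)) + (1)*(wb*wb*gaa*gaa)) + ((wa*gaa + wb*gab + wc*gac + wd*gad)*((1)*wb*gab + (-2)*wb*gac + (-1)*wd*gad + (-1)*wc*gac + (2)*wa*gcc + (2)*wb*gcc + (-2)*wb*gbc + (-2)*wd*gcd + (-4)*wa*gac) + (wa*gab + wb*gbb + wc*gbc + wd*gbd)*((2)*wb*gac + (-1)*wb*gaa) + (wa*gac + wb*gbc + wc*gcc + wd*gcd)*((2)*wb*gaa + (1)*wc*gaa + (4)*wa*gaa + (2)*wb*gab + (-2)*wb*gac + (-2)*wa*gac + (2)*wd*gad) + (wa*gad + wb*gbd + wc*gcd + wd*gdd)*((1)*wd*gaa)) = 0"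
    unfolding bet_def by (simp add: algebra_simps power2_eq_square)
  have Wz: "(wa*gaa + wb*gab + wc*gac + wd*gad)*((1)*wb*gab + (-2)*wb*gac + (-1)*wd*gad + (-1)*wc*gac + (2)*wa*gcc + (2)*wb*gcc + (-2)*wb*gbc + (-2)*wd*gcd + (-4)*wa*gac) + (wa*gab + wb*gbb + wc*gbc + wd*gbd)*((2)*wb*gac + (-1)*wb*gaa) + (wa*gac + wb*gbc + wc*gcc + wd*gcd)*((2)*wb*gaa + (1)*wc*gaa + (4)*wa*gaa + (2)*wb*gab + (-2)*wb*gac + (-2)*wa*gac + (2)*wd*gad) + (wa*gad + wb*gbd + wc*gcd + wd*gdd)*((1)*wd*gaa) = 0" by (simp only: W mult_zero_left add_0_right add_0)
  have id2: "((2)*wa*wd + (2)*wb*wd + (2)*wc*wd) * (bet gaa gcc gac gad gcd) = (1)*(wb*wb*(gab - gaa)*(gab - gaa)) + (2)*(wb*wc*gaa*gcc) + (2)*(wb*wb*gaa*(- gac)) + (2)*(wa*wb*gaa*(gbc - gbb)) + (2)*(wb*wb*gaa*(gbc - gbb)) + (2)*(wa*wb*gcc*(gab - gaa)) + (2)*(wa*wb*(gaa*gcc - gac^2)) + (2)*(wb*wb*gaa*(gab - gaa)) + (2)*(wb*wb*(gab - gaa)*(- gac)) + (2)*(wa*wa*(gaa*gcc - gac^2)) + (1)*(wd*wd*(gaa*gdd - gad^2)) + (2)*(wb*wb*gcc*(gab - gaa)) + (4)*(wa*wc*(gaa*gcc - gac^2)) + (2)*(wa*wd*(gaa*gcc -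 gac^2)) + (2)*(wb*wc*(gaa*gcc - gac^2)) + (2)*(wb*wd*(gaa*gcc - gac^2)) + (2)*(wc*wd*(gaa*gcc - gac^2)) + (1)*(wc*wc*(gaa*gcc - gac^2)) + (2)*(wa*wb*(gbc - gbb)*(- gac)) + (2)*(wb*wb*(gbc - gbb)*(- gac)) + (1)*(wb*wb*gaa*gbb) + (2)*(wb*wb*gaa*gcc) + (2)*(wb*wc*gcc*(gab - gaa)) + (2)*(wa*wb*gaa*gbb) + (2)*(wb*wd*(- gbd)*(- gac)) + (2)*(wa*wb*gaa*gcc) + (2)*(wa*wb*gbb*(- gac)) + (1)*(wb*wb*gaa*gaa)" using id Wz by linarith
  have p0: "0 < wb*wb*(gab - gaa)*(gab - gaa)" by (intro mult_pos_pos) (use pos a1 nbd nac in auto)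
  have p1: "0 < wb*wc*gaa*gcc" by (intro mult_pos_pos) (use pos a1 nbd nac in auto)
  have p2: "0 < wb*wb*gaa*(- gac)" by (intro mult_pos_pos) (use pos a1 nbd nac in auto)
  have p3: "0 < wa*wb*gaa*(gbc - gbb)" by (intro mult_pos_pos) (use pos a1 nbd nac in auto)
  have p4: "0 < wb*wb*gaa*(gbc - gbb)" by (intro mult_pos_pos) (use pos a1 nbd nac in auto)
  have p5: "0 < wa*wb*gcc*(gab - gaa)" by (intro mult_pos_pos) (use pos a1 nbd nac in auto)
  have p6: "0 \<le> wa*wb*(gaa*gcc - gac^2)" by (intro mult_nonneg_nonneg) (use pos a1 nbd nac m in auto)
  have p7: "0 < wb*wb*gaa*(gab - gaa)" by (intro mult_pos_pos) (use pos a1 nbd nac in auto)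
  have p8: "0 < wb*wb*(gab - gaa)*(- gac)" by (intro mult_pos_pos) (use pos a1 nbd nac in auto)
  have p9: "0 \<le> wa*wa*(gaa*gcc - gac^2)" by (intro mult_nonneg_nonneg) (use pos a1 nbd nac m in auto)
  have p10: "0 \<le> wd*wd*(gaa*gdd - gad^2)" by (intro mult_nonneg_nonneg) (use pos a1 nbd nac m in auto)
  have p11: "0 < wb*wb*gcc*(gab - gaa)" by (intro mult_pos_pos) (use pos a1 nbd nac in auto)
  have p12: "0 \<le> wa*wc*(gaa*gcc - gac^2)" by (intro mult_nonneg_nonneg) (use pos a1 nbd nac m in auto)
  have p13: "0 \<le> wa*wd*(gaa*gcc - gac^2)" by (intro mult_nonneg_nonneg) (use pos a1 nbd nac m in auto)
  have p14: "0 \<le> wb*wc*(gaa*gcc - gac^2)" by (intro mult_nonneg_nonneg) (use pos a1 nbd nac m in auto)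
  have p15: "0 \<le> wb*wd*(gaa*gcc - gac^2)" by (intro mult_nonneg_nonneg) (use pos a1 nbd nac m in auto)
  have p16: "0 \<le> wc*wd*(gaa*gcc - gac^2)" by (intro mult_nonneg_nonneg) (use pos a1 nbd nac m in auto)
  have p17: "0 \<le> wc*wc*(gaa*gcc - gac^2)" by (intro mult_nonneg_nonneg) (use pos a1 nbd nac m in auto)
  have p18: "0 < wa*wb*(gbc - gbb)*(- gac)" by (intro mult_pos_pos) (use pos a1 nbd nac in auto)
  have p19: "0 < wb*wb*(gbc - gbb)*(- gac)" by (intro mult_pos_pos) (use pos a1 nbd nac in auto)
  have p20: "0 < wb*wb*gaa*gbb" by (intro mult_pos_pos) (use pos a1 nbd nac in auto)
  have p21: "0 < wb*wb*gaa*gcc" by (intro mult_pos_pos) (use pos a1 nbd nac in auto)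
  have p22: "0 < wb*wc*gcc*(gab - gaa)" by (intro mult_pos_pos) (use pos a1 nbd nac in auto)
  have p23: "0 < wa*wb*gaa*gbb" by (intro mult_pos_pos) (use pos a1 nbd nac in auto)
  have p24: "0 < wb*wd*(- gbd)*(- gac)" by (intro mult_pos_pos) (use pos a1 nbd nac in auto)
  have p25: "0 < wa*wb*gaa*gcc" by (intro mult_pos_pos) (use pos a1 nbd nac in auto)
  have p26: "0 < wa*wb*gbb*(- gac)" by (intro mult_pos_pos) (use pos a1 nbd nac in auto)
  have p27: "0 < wb*wb*gaa*gaa" by (intro mult_pos_pos) (use pos a1 nbd nac in auto)
  have Mpos: "0 < (2)*wa*wd + (2)*wb*wd + (2)*wc*wd" using pos by (simp add: mult_pos_pos add_pos_pos)
  have "0 < ((2)*wa*wd + (2)*wb*wd + (2)*wc*wd) * (bet gaa gcc gac gad gcd)" unfolding id2 using p0 p1 p2 p3 p4 p5 p6 p7 p8 p9 p10 p11 p12 p13 p14 p15 p16 p17 p18 p19 p20 p21 p22 p23 p24 p25 p26 p27 by linarith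
  thus ?thesis using Mpos by (simp add: zero_less_mult_iff)
qed

lemma lstar_cd_acd_cd:
  fixes gaa gbb gcc gdd gab gac gad gbc gbd gcd wa wb wc wd :: real
  assumes W: "wa*gaa + wb*gab + wc*gac + wd*gad = 0" "wa*gab + wb*gbb + wc*gbc + wd*gbd = 0"
    "wa*gac + wb*gbc + wc*gcc + wd*gcd = 0" "wa*gad + wb*gbd + wc*gcd + wd*gdd = 0"
  and pos: "0 < wa" "0 < wb" "0 < wc" "0 < wd" "0 < gaa" "0 < gbb" "0 < gcc" "0 < gdd"
  and arcs: "gab > gaa" "gbc > gbb" "gcd > gcc"
  and CS: "gab^2 \<le> gaa*gbb" "gac^2 \<le> gaa*gcc" "gad^2 \<le> gaa*gdd" "gbc^2 \<le> gbb*gcc" "gbd^2 \<le> gbb*gdd" "gcd^2 \<le> gcc*gdd"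
  shows "0 < bet gcc gdd gcd gac gad"
proof -
  have nbd: "0 < - gbd" using lstar_nbd[OF W(2) pos(1-4) pos(5,6) arcs(1,2)] .
  have gcdpos: "0 < gcd" using arcs(3) pos by linarith
  have nac: "0 < - gac" using lstar_nac[OF W(3) pos(1-4) pos(6,7) arcs(2) gcdpos] .
  have a1: "0 < gab - gaa" "0 < gbc - gbb" "0 < gcd - gcc" using arcs by auto
  have m: "0 \<le> gaa*gbb - gab^2" "0 \<le> gaa*gcc - gac^2" "0 \<le> gaa*gdd - gad^2" "0 \<le> gbb*gcc - gbc^2" "0 \<le> gbb*gdd - gbd^2" "0 \<le> gcc*gdd - gcd^2" using CS by auto
  have id: "((1)*wa*wc + (2)*wa*wd) * (bet gcc gdd gcd gac gad) - ((1)*(wa*wb*gaa*gcc) + (1)*(wa*wa*(gaa*gcc - gac^2)) + (2)*(wb*wb*gbb*(gbc - gbb)) + (1)*(wc*wc*(gcc*gdd - gcd^2)) + (1)*(wa*wb*gaa*(gcd - gcc)) + (1)*(wb*wc*gdd*(gbc - gbb)) + (2)*(wb*wd*gdd*(gbc - gbb)) + (1)*(wb*wb*(gbc - gbb)*(gbc - gbb)) + (1)*(wb*wd*gcc*(- gbd)) + (1)*(wb*wb*gbb*(gcd - gcc)) + (1)*(wb*wd*(gcd - gcc)*(- gbd)) + (1)*(wa*wb*(gab - gaa)*(gcd - gcc)) + (1)*(wb*wc*(gcd - gcc)*(- gbd)) + (1)*(wb*wc*gbb*gdd) + (1)*(wb*wb*gbb*gbb) + (1)*(wa*wb*gcc*(gab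 - gaa)) + (2)*(wb*wd*gbb*gdd) + (2)*(wa*wd*(gcc*gdd - gcd^2)) + (1)*(wa*wc*(gcc*gdd - gcd^2)) + (3)*(wc*wd*(gcc*gdd - gcd^2)) + (1)*(wd*wd*(gcc*gdd - gcd^2))) + ((wa*gaa + wb*gab + wc*gac + wd*gad)*((1)*wa*gcc) + (wa*gab + wb*gbb + wc*gbc + wd*gbd)*((1)*wb*gcd + (-1)*wb*gcc) + (wa*gac + wb*gbc + wc*gcc + wd*gcd)*((-2)*wa*gad + (-1)*wd*gcd + (1)*wc*gdd + (-1)*wa*gac + (-2)*wb*gbd + (1)*wb*gbc + (-3)*wc*gcd) + (wa*gad + wb*gbd + wc*gcd + wd*gdd)*((2)*wb*gbc + (3)*wc*gcc + (1)*wd*gcc + (2)*wa*gac + (-1)*wc*gcd)) = 0"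
    unfolding bet_def by (simp add: algebra_simps power2_eq_square)
  have Wz: "(wa*gaa + wb*gab + wc*gac + wd*gad)*((1)*wa*gcc) + (wa*gab + wb*gbb + wc*gbc + wd*gbd)*((1)*wb*gcd + (-1)*wb*gcc) + (wa*gac + wb*gbc + wc*gcc + wd*gcd)*((-2)*wa*gad + (-1)*wd*gcd + (1)*wc*gdd + (-1)*wa*gac + (-2)*wb*gbd + (1)*wb*gbc + (-3)*wc*gcd) + (wa*gad + wb*gbd + wc*gcd + wd*gdd)*((2)*wb*gbc + (3)*wc*gcc + (1)*wd*gcc + (2)*wa*gac + (-1)*wc*gcd) = 0" by (simp only: W mult_zero_left add_0_right add_0)
  have id2: "((1)*wa*wc + (2)*wa*wd) * (bet gcc gdd gcd gac gad) = (1)*(wa*wb*gaa*gcc) + (1)*(wa*wa*(gaa*gcc - gac^2)) + (2)*(wb*wb*gbb*(gbc - gbb)) + (1)*(wc*wc*(gcc*gdd - gcd^2)) + (1)*(wa*wb*gaa*(gcd - gcc)) + (1)*(wb*wc*gdd*(gbc - gbb)) + (2)*(wb*wd*gdd*(gbc - gbb)) + (1)*(wb*wb*(gbc - gbb)*(gbc - gbb)) + (1)*(wb*wd*gcc*(- gbd)) + (1)*(wb*wb*gbb*(gcd - gcc)) + (1)*(wb*wd*(gcd - gcc)*(- gbd)) + (1)*(wa*wb*(gab - gaa)*(gcd - gcc)) + (1)*(wb*wc*(gcd - gcc)*(- gbd)) + (1)*(wb*wc*gbb*gdd) + (1)*(wb*wb*gbb*gbb) + (1)*(wa*wb*gcc*(gab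 - gaa)) + (2)*(wb*wd*gbb*gdd) + (2)*(wa*wd*(gcc*gdd - gcd^2)) + (1)*(wa*wc*(gcc*gdd - gcd^2)) + (3)*(wc*wd*(gcc*gdd - gcd^2)) + (1)*(wd*wd*(gcc*gdd - gcd^2))" using id Wz by linarith
  have p0: "0 < wa*wb*gaa*gcc" by (intro mult_pos_pos) (use pos a1 nbd nac in auto)
  have p1: "0 \<le> wa*wa*(gaa*gcc - gac^2)" by (intro mult_nonneg_nonneg) (use pos a1 nbd nac m in auto)
  have p2: "0 < wb*wb*gbb*(gbc - gbb)" by (intro mult_pos_pos) (use pos a1 nbd nac in auto)
  have p3: "0 \<le> wc*wc*(gcc*gdd - gcd^2)" by (intro mult_nonneg_nonneg) (use pos a1 nbd nac m in auto)
  have p4: "0 < wa*wb*gaa*(gcd - gcc)" by (intro mult_pos_pos) (use pos a1 nbd nac in auto)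
  have p5: "0 < wb*wc*gdd*(gbc - gbb)" by (intro mult_pos_pos) (use pos a1 nbd nac in auto)
  have p6: "0 < wb*wd*gdd*(gbc - gbb)" by (intro mult_pos_pos) (use pos a1 nbd nac in auto)
  have p7: "0 < wb*wb*(gbc - gbb)*(gbc - gbb)" by (intro mult_pos_pos) (use pos a1 nbd nac in auto)
  have p8: "0 < wb*wd*gcc*(- gbd)" by (intro mult_pos_pos) (use pos a1 nbd nac in auto)
  have p9: "0 < wb*wb*gbb*(gcd - gcc)" by (intro mult_pos_pos) (use pos a1 nbd nac in auto)
  have p10: "0 < wb*wd*(gcd - gcc)*(- gbd)" by (intro mult_pos_pos) (use pos a1 nbd nac in auto)
  have p11: "0 < wa*wb*(gab - gaa)*(gcd - gcc)" by (intro mult_pos_pos) (use pos a1 nbd nac in auto)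
  have p12: "0 < wb*wc*(gcd - gcc)*(- gbd)" by (intro mult_pos_pos) (use pos a1 nbd nac in auto)
  have p13: "0 < wb*wc*gbb*gdd" by (intro mult_pos_pos) (use pos a1 nbd nac in auto)
  have p14: "0 < wb*wb*gbb*gbb" by (intro mult_pos_pos) (use pos a1 nbd nac in auto)
  have p15: "0 < wa*wb*gcc*(gab - gaa)" by (intro mult_pos_pos) (use pos a1 nbd nac in auto)
  have p16: "0 < wb*wd*gbb*gdd" by (intro mult_pos_pos) (use pos a1 nbd nac in auto)
  have p17: "0 \<le> wa*wd*(gcc*gdd - gcd^2)" by (intro mult_nonneg_nonneg) (use pos a1 nbd nac m in auto)
  have p18: "0 \<le> wa*wc*(gcc*gdd - gcd^2)" by (intro mult_nonneg_nonneg) (use pos a1 nbd nac m in auto)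
  have p19: "0 \<le> wc*wd*(gcc*gdd - gcd^2)" by (intro mult_nonneg_nonneg) (use pos a1 nbd nac m in auto)
  have p20: "0 \<le> wd*wd*(gcc*gdd - gcd^2)" by (intro mult_nonneg_nonneg) (use pos a1 nbd nac m in auto)
  have Mpos: "0 < (1)*wa*wc + (2)*wa*wd" using pos by (simp add: mult_pos_pos add_pos_pos)
  have "0 < ((1)*wa*wc + (2)*wa*wd) * (bet gcc gdd gcd gac gad)" unfolding id2 using p0 p1 p2 p3 p4 p5 p6 p7 p8 p9 p10 p11 p12 p13 p14 p15 p16 p17 p18 p19 p20 by linarith
  thus ?thesis using Mpos by (simp add: zero_less_mult_iff)
qed

lemma lstar_cd_acd_ad:
  fixes gaa gbb gcc gdd gab gac gad gbc gbd gcd wa wb wc wd :: real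
  assumes W: "wa*gaa + wb*gab + wc*gac + wd*gad = 0" "wa*gab + wb*gbb + wc*gbc + wd*gbd = 0"
    "wa*gac + wb*gbc + wc*gcc + wd*gcd = 0" "wa*gad + wb*gbd + wc*gcd + wd*gdd = 0"
  and pos: "0 < wa" "0 < wb" "0 < wc" "0 < wd" "0 < gaa" "0 < gbb" "0 < gcc" "0 < gdd"
  and arcs: "gab > gaa" "gbc > gbb" "gcd > gcc"
  and CS: "gab^2 \<le> gaa*gbb" "gac^2 \<le> gaa*gcc" "gad^2 \<le> gaa*gdd" "gbc^2 \<le> gbb*gcc" "gbd^2 \<le> gbb*gdd" "gcd^2 \<le> gcc*gdd"
  shows "0 < bet gaa gdd gad gac gcd"
proof -
  have nbd: "0 < - gbd" using lstar_nbd[OF W(2) pos(1-4) pos(5,6) arcs(1,2)] .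
  have gcdpos: "0 < gcd" using arcs(3) pos by linarith
  have nac: "0 < - gac" using lstar_nac[OF W(3) pos(1-4) pos(6,7) arcs(2) gcdpos] .
  have a1: "0 < gab - gaa" "0 < gbc - gbb" "0 < gcd - gcc" using arcs by auto
  have m: "0 \<le> gaa*gbb - gab^2" "0 \<le> gaa*gcc - gac^2" "0 \<le> gaa*gdd - gad^2" "0 \<le> gbb*gcc - gbc^2" "0 \<le> gbb*gdd - gbd^2" "0 \<le> gcc*gdd - gcd^2" using CS by auto
  have id: "((1)*wa*wd) * (bet gaa gdd gad gac gcd) - ((1)*(wa*wb*(gab - gaa)*(- gac)) + (1)*(wa*wc*(gaa*gcc - gac^2)) + (1)*(wa*wb*gaa*(- gac)) + (1)*(wa*wd*(gaa*gdd - gad^2)) + (1)*(wa*wb*gaa*(gbc - gbb)) + (1)*(wa*wb*gaa*gbb) + (1)*(wb*wd*gdd*(gbc - gbb)) + (1)*(wb*wd*gcc*(- gbd)) + (1)*(wb*wd*(gcd - gcc)*(- gbd)) + (1)*(wb*wd*gbb*gdd) + (1)*(wc*wd*(gcc*gdd - gcd^2))) + ((wa*gaa + wb*gab + wc*gac + wd*gad)*((-1)*wa*gac) + (wa*gab + wb*gbb + wc*gbc + wd*gbd)*(0) + (wa*gac + wb*gbc + wc*gcc + wd*gcd)*((1)*wa*gaa + (-1)*wb*gbd + (-1)*wa*gad + (-1)*wc*gcd) + (wa*gad + wb*gbd + wc*gcd + wd*gdd)*((1)*wa*gac + (1)*wb*gbc + (1)*wc*gcc)) = 0"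
    unfolding bet_def by (simp add: algebra_simps power2_eq_square)
  have Wz: "(wa*gaa + wb*gab + wc*gac + wd*gad)*((-1)*wa*gac) + (wa*gab + wb*gbb + wc*gbc + wd*gbd)*(0) + (wa*gac + wb*gbc + wc*gcc + wd*gcd)*((1)*wa*gaa + (-1)*wb*gbd + (-1)*wa*gad + (-1)*wc*gcd) + (wa*gad + wb*gbd + wc*gcd + wd*gdd)*((1)*wa*gac + (1)*wb*gbc + (1)*wc*gcc) = 0" by (simp only: W mult_zero_left add_0_right add_0)
  have id2: "((1)*wa*wd) * (bet gaa gdd gad gac gcd) = (1)*(wa*wb*(gab - gaa)*(- gac)) + (1)*(wa*wc*(gaa*gcc - gac^2)) + (1)*(wa*wb*gaa*(- gac)) + (1)*(wa*wd*(gaa*gdd - gad^2)) + (1)*(wa*wb*gaa*(gbc - gbb)) + (1)*(wa*wb*gaa*gbb) + (1)*(wb*wd*gdd*(gbc - gbb)) + (1)*(wb*wd*gcc*(- gbd)) + (1)*(wb*wd*(gcd - gcc)*(- gbd)) + (1)*(wb*wd*gbb*gdd) + (1)*(wc*wd*(gcc*gdd - gcd^2))" using id Wz by linarith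
  have p0: "0 < wa*wb*(gab - gaa)*(- gac)" by (intro mult_pos_pos) (use pos a1 nbd nac in auto)
  have p1: "0 \<le> wa*wc*(gaa*gcc - gac^2)" by (intro mult_nonneg_nonneg) (use pos a1 nbd nac m in auto)
  have p2: "0 < wa*wb*gaa*(- gac)" by (intro mult_pos_pos) (use pos a1 nbd nac in auto)
  have p3: "0 \<le> wa*wd*(gaa*gdd - gad^2)" by (intro mult_nonneg_nonneg) (use pos a1 nbd nac m in auto)
  have p4: "0 < wa*wb*gaa*(gbc - gbb)" by (intro mult_pos_pos) (use pos a1 nbd nac in auto)
  have p5: "0 < wa*wb*gaa*gbb" by (intro mult_pos_pos) (use pos a1 nbd nac in auto)
  have p6: "0 < wb*wd*gdd*(gbc - gbb)" by (intro mult_pos_pos) (use pos a1 nbd nac in auto)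
  have p7: "0 < wb*wd*gcc*(- gbd)" by (intro mult_pos_pos) (use pos a1 nbd nac in auto)
  have p8: "0 < wb*wd*(gcd - gcc)*(- gbd)" by (intro mult_pos_pos) (use pos a1 nbd nac in auto)
  have p9: "0 < wb*wd*gbb*gdd" by (intro mult_pos_pos) (use pos a1 nbd nac in auto)
  have p10: "0 \<le> wc*wd*(gcc*gdd - gcd^2)" by (intro mult_nonneg_nonneg) (use pos a1 nbd nac m in auto)
  have Mpos: "0 < (1)*wa*wd" using pos by (simp add: mult_pos_pos add_pos_pos)
  have "0 < ((1)*wa*wd) * (bet gaa gdd gad gac gcd)" unfolding id2 using p0 p1 p2 p3 p4 p5 p6 p7 p8 p9 p10 by linarith
  thus ?thesis using Mpos by (simp add: zero_less_mult_iff)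
qed

lemma cfg_ne_all:
  assumes S: "cfg z w a b c d"
  shows "a \<noteq> z" "b \<noteq> z" "c \<noteq> z" "d \<noteq> z"
proof -
  have D: "distinct [a,b,c,d]" using S unfolding cfg_def by simp
  show "a \<noteq> z" using cfg_ne[OF S] .
  show "b \<noteq> z" using cfg_ne[OF cfg_perm[OF S, of b a c d]] D by (auto simp: insert_commute)
  show "c \<noteq> z" using cfg_ne[OF cfg_perm[OF S, of c a b d]] D by (auto simp: insert_commute)
  show "d \<noteq> z" using cfg_ne[OF cfg_perm[OF S, of d a b c]] D by (auto simp: insert_commute)
qed

lemma lstar_geom:
  assumes S: "cfg z w a b c d" and ab: "arcz z a b" and bc: "arcz z b c"
    and hcd: "arcz z c d \<or> arcz z d c"
  shows "0 < bet (gg z a a) (gg z b b) (gg z a b) (gg z a d) (gg z b d)"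
    "0 < bet (gg z b b) (gg z d d) (gg z b d) (gg z a b) (gg z a d)"
    "0 < bet (gg z a a) (gg z d d) (gg z a d) (gg z a b) (gg z b d)"
    "0 < bet (gg z a a) (gg z c c) (gg z a c) (gg z a d) (gg z c d)"
    "0 < bet (gg z c c) (gg z d d) (gg z c d) (gg z a c) (gg z a d)"
    "0 < bet (gg z a a) (gg z d d) (gg z a d) (gg z a c) (gg z c d)"
proof -
  note e = cfg_expand[OF S]
  note ne = cfg_ne_all[OF S]
  have W1: "w a * gg z a a + w b * gg z a b + w c * gg z a c + w d * gg z a d = 0"
    using cfg_W[OF S, of a] by (simp add: gg_sym)
  have W2: "w a * gg z a b + w b * gg z b b + w c * gg z b c + w d * gg z b d = 0"
    using cfg_W[OF S, of b] by (simp add: gg_sym)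
  have W3: "w a * gg z a c + w b * gg z b c + w c * gg z c c + w d * gg z c d = 0"
    using cfg_W[OF S, of c] by (simp add: gg_sym)
  have W4: "w a * gg z a d + w b * gg z b d + w c * gg z c d + w d * gg z d d = 0"
    using cfg_W[OF S, of d] by (simp add: gg_sym)
  have P: "0 < gg z a a" "0 < gg z b b" "0 < gg z c c" "0 < gg z d d"
    using gg_self_pos ne by auto
  have A1: "gg z a b > gg z a a" using ab arcz_gg by blast
  have A2: "gg z b c > gg z b b" using bc arcz_gg by blast
  note C = gg_CS[of z a b] gg_CS[of z a c] gg_CS[of z a d] gg_CS[of z b c] gg_CS[of z b d] gg_CS[of z c d]
  show "0 < bet (gg z a a) (gg z b b) (gg z a b) (gg z a d) (gg z b d)"
    "0 < bet (gg z b b) (gg z d d) (gg z b d) (gg z a b) (gg z a d)"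
    "0 < bet (gg z a a) (gg z d d) (gg z a d) (gg z a b) (gg z b d)"
    "0 < bet (gg z a a) (gg z c c) (gg z a c) (gg z a d) (gg z c d)"
    "0 < bet (gg z c c) (gg z d d) (gg z c d) (gg z a c) (gg z a d)"
    "0 < bet (gg z a a) (gg z d d) (gg z a d) (gg z a c) (gg z c d)"
  proof -
    consider (dc) "gg z c d > gg z d d" | (cd) "gg z c d > gg z c c"
    proof -
      have "gg z d c = gg z c d" by (rule gg_sym)
      thus ?thesis using hcd that arcz_gg[of z c d] arcz_gg[of z d c] by auto
    qed
    then have "0 < bet (gg z a a) (gg z b b) (gg z a b) (gg z a d) (gg z b d) \<and>
      0 < bet (gg z b b) (gg z d d) (gg z b d) (gg z a b) (gg z a d) \<and>
      0 < bet (gg z a a) (gg z d d) (gg z a d) (gg z a b) (gg z b d) \<and>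
      0 < bet (gg z a a) (gg z c c) (gg z a c) (gg z a d) (gg z c d) \<and>
      0 < bet (gg z c c) (gg z d d) (gg z c d) (gg z a c) (gg z a d) \<and>
      0 < bet (gg z a a) (gg z d d) (gg z a d) (gg z a c) (gg z c d)"
    proof cases
      case dc
      note H = W1 W2 W3 W4 e(3-6) P A1 A2 dc C
      show ?thesis using lstar_dc_abd_ab[OF H] lstar_dc_abd_bd[OF H] lstar_dc_abd_ad[OF H]
        lstar_dc_acd_ac[OF H] lstar_dc_acd_cd[OF H] lstar_dc_acd_ad[OF H] by blast
    next
      case cd
      note H = W1 W2 W3 W4 e(3-6) P A1 A2 cd C
      show ?thesis using lstar_cd_abd_ab[OF H] lstar_cd_abd_bd[OF H] lstar_cd_abd_ad[OF H]
        lstar_cd_acd_ac[OF H] lstar_cd_acd_cd[OF H] lstar_cd_acd_ad[OF H] by blast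
    qed
    thus "0 < bet (gg z a a) (gg z b b) (gg z a b) (gg z a d) (gg z b d)"
    "0 < bet (gg z b b) (gg z d d) (gg z b d) (gg z a b) (gg z a d)"
    "0 < bet (gg z a a) (gg z d d) (gg z a d) (gg z a b) (gg z b d)"
    "0 < bet (gg z a a) (gg z c c) (gg z a c) (gg z a d) (gg z c d)"
    "0 < bet (gg z c c) (gg z d d) (gg z c d) (gg z a c) (gg z a d)"
    "0 < bet (gg z a a) (gg z d d) (gg z a d) (gg z a c) (gg z c d)" by auto
  qed
qed
lemma bet_identities:
  fixes xx yy tt xy xt yt :: real
  defines "Bt \<equiv> bet xx yy xy xt yt" and "Bx \<equiv> bet yy tt yt xy xt" and "By \<equiv> bet xx tt xt xy yt"
  shows "Bx*xx + By*xy + Bt*xt = Bx*xy + By*yy + Bt*yt"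
    "Bx*xx + By*xy + Bt*xt = Bx*xt + By*yt + Bt*tt"
  unfolding Bt_def Bx_def By_def bet_def by (simp_all add: algebra_simps power2_eq_square)

lemma halfspace_hull:
  fixes h :: "real^3"
  assumes "T = convex hull V" "\<forall>v\<in>V. inner h v \<le> k"
  shows "\<forall>p\<in>T. inner h p \<le> k"
proof -
  have "convex hull V \<subseteq> {p. inner h p \<le> k}"
    by (rule hull_minimal) (use assms(2) convex_halfspace_le in auto)
  thus ?thesis using assms(1) by auto
qed

lemma face_eq:
  assumes S: "cfg z w x y t s" and T: "T = convex hull {x,y,t,s}"
    and hbt: "0 < bet (gg z x x) (gg z y y) (gg z x y) (gg z x t) (gg z y t)"
    and hbx: "0 < bet (gg z y y) (gg z t t) (gg z y t) (gg z x y) (gg z x t)"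
    and hby: "0 < bet (gg z x x) (gg z t t) (gg z x t) (gg z x y) (gg z y t)"
  shows "equilibrium_on T z (convex hull {x,y,t})"
proof -
  note e = cfg_expand[OF S]
  have D: "distinct [x,y,t,s]" and ind: "\<not> affine_dependent {x,y,t,s}" using S unfolding cfg_def by auto
  have ind3: "\<not> affine_dependent {x,y,t}" using ind by (rule affine_independent_subset) auto
  define Bt where "Bt = bet (gg z x x) (gg z y y) (gg z x y) (gg z x t) (gg z y t)"
  define Bx where "Bx = bet (gg z y y) (gg z t t) (gg z y t) (gg z x y) (gg z x t)"
  define By where "By = bet (gg z x x) (gg z t t) (gg z x t) (gg z x y) (gg z y t)"
  define Sm where "Sm = Bx + By + Bt"
  have Sp: "0 < Sm" using hbt hbx hby unfolding Sm_def Bt_def Bx_def By_def by linarith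
  define lx where "lx = Bx / Sm"
  define ly where "ly = By / Sm"
  define lt where "lt = Bt / Sm"
  have lpos: "0 < lx" "0 < ly" "0 < lt" using hbt hbx hby Sp unfolding lx_def ly_def lt_def Bt_def Bx_def By_def by auto
  have lsum: "lx + ly + lt = 1"
  proof -
    have "lx + ly + lt = (Bx + By + Bt) / Sm" by (simp add: lx_def ly_def lt_def add_divide_distrib)
    also have "\<dots> = 1" using Sp unfolding Sm_def by simp
    finally show ?thesis .
  qed
  define Q where "Q = lx *\<^sub>R x + ly *\<^sub>R y + lt *\<^sub>R t"
  have Qrel: "Q \<in> rel_interior (convex hull {x,y,t})"
  proof -
    define u where "u v = (if v = x then lx else if v = y then ly else lt)" for v
    have uv: "u x = lx" "u y = ly" "u t = lt" using D by (auto simp: u_def)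
    have "(\<forall>v\<in>{x,y,t}. 0 < u v) \<and> sum u {x,y,t} = 1 \<and> (\<Sum>v\<in>{x,y,t}. u v *\<^sub>R v) = Q"
      using D lpos lsum uv by (simp add: Q_def)
    thus ?thesis unfolding rel_interior_convex_hull_explicit[OF ind3] by blast
  qed
  define h where "h = Q - z"
  have hexp: "h = lx *\<^sub>R (x - z) + ly *\<^sub>R (y - z) + lt *\<^sub>R (t - z)"
  proof -
    have "lx *\<^sub>R (x - z) + ly *\<^sub>R (y - z) + lt *\<^sub>R (t - z) = Q - (lx + ly + lt) *\<^sub>R z"
      unfolding Q_def by (simp add: algebra_simps scaleR_add_left)
    thus ?thesis using lsum unfolding h_def by simp
  qed
  define K where "K = Bx * gg z x x + By * gg z x y + Bt * gg z x t"
  have idn: "Bx * gg z x x + By * gg z x y + Bt * gg z x t = Bx * gg z x y + By * gg z y y + Bt * gg z y t"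
    "Bx * gg z x x + By * gg z x y + Bt * gg z x t = Bx * gg z x t + By * gg z y t + Bt * gg z t t"
    unfolding Bt_def Bx_def By_def by (rule bet_identities)+
  have sy: "gg z y x = gg z x y" "gg z t x = gg z x t" "gg z t y = gg z y t" by (simp_all add: gg_sym)
  have hx0: "inner h (x - z) = lx * gg z x x + ly * gg z x y + lt * gg z x t"
    unfolding hexp using sy by (simp add: inner_add_left gg_def)
  have hy0: "inner h (y - z) = lx * gg z x y + ly * gg z y y + lt * gg z y t"
    unfolding hexp using sy by (simp add: inner_add_left gg_def)
  have ht0: "inner h (t - z) = lx * gg z x t + ly * gg z y t + lt * gg z t t"
    unfolding hexp using sy by (simp add: inner_add_left gg_def)
  have hx: "inner h (x - z) = K / Sm"
    unfolding hx0 K_def lx_def ly_def lt_def by (simp add: add_divide_distrib)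
  have hy: "inner h (y - z) = K / Sm"
    unfolding hy0 lx_def ly_def lt_def using idn(1) unfolding K_def by (simp add: add_divide_distrib)
  have ht: "inner h (t - z) = K / Sm"
    unfolding ht0 lx_def ly_def lt_def using idn(2) unfolding K_def by (simp add: add_divide_distrib)
  have hh: "inner h h = K / Sm"
  proof -
    have "inner h h = lx * inner h (x - z) + ly * inner h (y - z) + lt * inner h (t - z)"
      by (subst (2) hexp) (simp add: inner_add_right)
    also have "\<dots> = (lx + ly + lt) * (K / Sm)" unfolding hx hy ht by (simp add: distrib_right add_divide_distrib)
    finally show ?thesis using lsum by simp
  qed
  have hs: "inner h (s - z) \<le> 0"
  proof -
    have "w x *\<^sub>R (x - z) + w y *\<^sub>R (y - z) + w t *\<^sub>R (t - z) + w s *\<^sub>R (s - z)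
        = (w x *\<^sub>R x + w y *\<^sub>R y + w t *\<^sub>R t + w s *\<^sub>R s) - (w x + w y + w t + w s) *\<^sub>R z"
      by (simp add: algebra_simps scaleR_add_left)
    also have "\<dots> = 0" using e(1,2) by simp
    finally have "inner h (w x *\<^sub>R (x - z) + w y *\<^sub>R (y - z) + w t *\<^sub>R (t - z) + w s *\<^sub>R (s - z)) = 0"
      by simp
    hence "w x * (K/Sm) + w y * (K/Sm) + w t * (K/Sm) + w s * inner h (s - z) = 0"
      using hx hy ht by (simp add: inner_add_right)
    moreover have "0 \<le> K / Sm" using hh by (metis inner_ge_zero)
    moreover have "0 \<le> w x * (K/Sm)" by (intro mult_nonneg_nonneg) (use e(3) calculation(2) in auto)
    moreover have "0 \<le> w y * (K/Sm)" by (intro mult_nonneg_nonneg) (use e(4) calculation(2) in auto)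
    moreover have "0 \<le> w t * (K/Sm)" by (intro mult_nonneg_nonneg) (use e(5) calculation(2) in auto)
    ultimately have "w s * inner h (s - z) \<le> 0" by linarith
    thus ?thesis using e(6) by (simp add: mult_le_0_iff)
  qed
  have vert: "\<forall>v\<in>{x,y,t,s}. inner h v \<le> inner h Q"
  proof -
    have Qz: "Q = z + h" unfolding h_def by simp
    have "inner h x - inner h Q = inner h (x - z) - inner h h" unfolding Qz by (simp add: inner_diff_right inner_add_right)
    moreover have "inner h y - inner h Q = inner h (y - z) - inner h h" unfolding Qz by (simp add: inner_diff_right inner_add_right)
    moreover have "inner h t - inner h Q = inner h (t - z) - inner h h" unfolding Qz by (simp add: inner_diff_right inner_add_right)
    moreover have "inner h s - inner h Q = inner h (s - z) - inner h h" unfolding Qz by (simp add: inner_diff_right inner_add_right)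
    moreover have "0 \<le> inner h h" by simp
    ultimately show ?thesis using hx hy ht hh hs by auto
  qed
  have hne: "h \<noteq> 0"
  proof
    assume h0: "h = 0"
    hence Qz: "Q = z" unfolding h_def by simp
    have fin: "finite {x,y,t,s}" by simp
    define U where "U v = (if v = x then w x - lx else if v = y then w y - ly else if v = t then w t - lt else w s)" for v
    have ne: "y \<noteq> x" "t \<noteq> x" "t \<noteq> y" "s \<noteq> x" "s \<noteq> y" "s \<noteq> t" using D by auto
    have u: "U x = w x - lx" "U y = w y - ly" "U t = w t - lt" "U s = w s" using ne by (auto simp: U_def)
    have s1: "sum U {x,y,t,s} = U x + U y + U t + U s" using D by simp
    have s2: "(\<Sum>v\<in>{x,y,t,s}. U v *\<^sub>R v) = U x *\<^sub>R x + U y *\<^sub>R y + U t *\<^sub>R t + U s *\<^sub>R s" using D by simp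
    have "sum U {x,y,t,s} = 0" unfolding s1 u using e(1) lsum by simp
    moreover have "U s \<noteq> 0" using e(6) u by simp
    moreover have "(\<Sum>v\<in>{x,y,t,s}. U v *\<^sub>R v) = 0"
    proof -
      have "(\<Sum>v\<in>{x,y,t,s}. U v *\<^sub>R v) = (w x *\<^sub>R x + w y *\<^sub>R y + w t *\<^sub>R t + w s *\<^sub>R s) - Q"
        unfolding s2 u Q_def by (simp add: algebra_simps)
      thus ?thesis using e(2) Qz by simp
    qed
    ultimately have "affine_dependent {x,y,t,s}"
      unfolding affine_dependent_explicit_finite[OF fin] by blast
    thus False using ind by simp
  qed
  have QT: "Q \<in> T"
  proof -
    have "Q \<in> convex hull {x,y,t}" using Qrel rel_interior_subset by blast
    moreover have "convex hull {x,y,t} \<subseteq> convex hull {x,y,t,s}" by (rule hull_mono) auto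
    ultimately show ?thesis using T by auto
  qed
  have allT: "\<forall>p\<in>T. inner h p \<le> inner h Q" by (rule halfspace_hull[OF T vert])
  have "supporting_plane_at T h Q"
    unfolding supporting_plane_at_def using hne QT allT by blast
  thus ?thesis unfolding equilibrium_on_def h_def using Qrel by blast
qed
lemma two_arcs_no_eq:
  fixes x m t z :: "real^3"
  assumes ind3: "\<not> affine_dependent {x,m,t}" and D: "distinct [x,m,t]"
    and zT: "z \<in> T" and sub: "{x,m,t} \<subseteq> T"
    and a1: "arcz z x m \<or> arcz z m x" and a2: "arcz z t m \<or> arcz z m t"
  shows "\<not> equilibrium_on T z (convex hull {x,m,t})"
proof
  assume "equilibrium_on T z (convex hull {x,m,t})"
  then obtain Q where Qr: "Q \<in> rel_interior (convex hull {x,m,t})"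
    and sp: "supporting_plane_at T (Q - z) Q" unfolding equilibrium_on_def by blast
  obtain u where u: "\<forall>v\<in>{x,m,t}. 0 < u v" "sum u {x,m,t} = 1" "(\<Sum>v\<in>{x,m,t}. u v *\<^sub>R v) = Q"
    using Qr unfolding rel_interior_convex_hull_explicit[OF ind3] by blast
  have us: "u x + u m + u t = 1" "u x *\<^sub>R x + u m *\<^sub>R m + u t *\<^sub>R t = Q" "0 < u x" "0 < u m" "0 < u t"
    using u D by (auto simp: add.assoc)
  define h where "h = Q - z"
  have hne: "h \<noteq> 0" and side: "(\<forall>p\<in>T. inner h p \<le> inner h Q) \<or> (\<forall>p\<in>T. inner h p \<ge> inner h Q)"
    using sp unfolding supporting_plane_at_def h_def by auto
  have le: "\<forall>p\<in>T. inner h p \<le> inner h Q"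
  proof -
    { assume ge: "\<forall>p\<in>T. inner h p \<ge> inner h Q"
      hence "inner h z \<ge> inner h Q" using zT by auto
      hence "inner h (z - Q) \<ge> 0" by (simp add: inner_diff_right)
      moreover have "z - Q = - h" unfolding h_def by simp
      ultimately have "inner h h \<le> 0" by simp
      hence "h = 0" by (meson inner_gt_zero_iff not_le)
      with hne have False by simp }
    thus ?thesis using side by blast
  qed
  have px: "inner h (x - Q) \<le> 0" "inner h (m - Q) \<le> 0" "inner h (t - Q) \<le> 0"
    using le sub by (auto simp: inner_diff_right)
  have sum0: "u x *\<^sub>R (x - Q) + u m *\<^sub>R (m - Q) + u t *\<^sub>R (t - Q) = 0"
  proof -
    have "u x *\<^sub>R (x - Q) + u m *\<^sub>R (m - Q) + u t *\<^sub>R (t - Q)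
       = (u x *\<^sub>R x + u m *\<^sub>R m + u t *\<^sub>R t) - (u x + u m + u t) *\<^sub>R Q"
      by (simp add: algebra_simps scaleR_add_left)
    then show ?thesis using us by simp
  qed
  have "inner h (u x *\<^sub>R (x - Q) + u m *\<^sub>R (m - Q) + u t *\<^sub>R (t - Q)) = 0" using sum0 by simp
  hence s3: "u x * inner h (x - Q) + u m * inner h (m - Q) + u t * inner h (t - Q) = 0"
    by (simp add: inner_add_right)
  have q1: "u x * inner h (x - Q) \<le> 0" using us(3) px(1) by (simp add: mult_le_0_iff)
  have q2: "u m * inner h (m - Q) \<le> 0" using us(4) px(2) by (simp add: mult_le_0_iff)
  have q3: "u t * inner h (t - Q) \<le> 0" using us(5) px(3) by (simp add: mult_le_0_iff)
  have "u x * inner h (x - Q) = 0" "u m * inner h (m - Q) = 0" "u t * inner h (t - Q) = 0"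
    using s3 q1 q2 q3 by linarith+
  hence z0: "inner h (x - Q) = 0" "inner h (m - Q) = 0" "inner h (t - Q) = 0"
    using us(3-5) by auto
  have zQ: "z = Q - h" unfolding h_def by simp
  have key: "inner (p - Q) (m - Q) > 0" if p: "p = x \<or> p = t" and ar: "arcz z p m \<or> arcz z m p" for p
  proof -
    have hp: "inner h (p - Q) = 0" using p z0 by auto
    have hmp: "inner h (m - p) = 0"
    proof -
      have "m - p = (m - Q) - (p - Q)" by simp
      thus ?thesis using hp z0(2) by (simp add: inner_diff_right)
    qed
    have hpm: "inner h (p - m) = 0" using hmp by (metis inner_minus_right minus_diff_eq neg_equal_0_iff_equal)
    show ?thesis using ar
    proof
      assume "arcz z p m"
      hence "inner (z - p) (m - p) < 0" unfolding arcz_def .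
      moreover have "inner (z - p) (m - p) = inner (Q - p) (m - p)"
        unfolding zQ using hmp by (simp add: inner_diff_left)
      ultimately have neg: "inner (Q - p) (m - p) < 0" by simp
      have "inner (p - Q) (m - Q) = - inner (Q - p) (m - p) + inner (p - Q) (p - Q)"
        by (simp add: inner_diff_left inner_diff_right inner_commute algebra_simps)
      moreover have "inner (p - Q) (p - Q) \<ge> 0" by simp
      ultimately show ?thesis using neg by linarith
    next
      assume "arcz z m p"
      hence "inner (z - m) (p - m) < 0" unfolding arcz_def .
      moreover have "inner (z - m) (p - m) = inner (Q - m) (p - m)"
        unfolding zQ using hpm by (simp add: inner_diff_left)
      ultimately have neg: "inner (Q - m) (p - m) < 0" by simp
      have "inner (p - Q) (m - Q) = - inner (Q - m) (p - m) + inner (m - Q) (m - Q)"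
        by (simp add: inner_diff_left inner_diff_right inner_commute algebra_simps)
      moreover have "inner (m - Q) (m - Q) \<ge> 0" by simp
      ultimately show ?thesis using neg by linarith
    qed
  qed
  have k1: "inner (x - Q) (m - Q) > 0" using key a1 by blast
  have k2: "inner (t - Q) (m - Q) > 0" using key a2 by blast
  have "inner (u x *\<^sub>R (x - Q) + u m *\<^sub>R (m - Q) + u t *\<^sub>R (t - Q)) (m - Q) = 0" using sum0 by simp
  hence e0: "u x * inner (x - Q) (m - Q) + u m * inner (m - Q) (m - Q) + u t * inner (t - Q) (m - Q) = 0"
    by (simp add: inner_add_left)
  have "0 < u x * inner (x - Q) (m - Q)" using us(3) k1 by simp
  moreover have "0 \<le> u m * inner (m - Q) (m - Q)" using us(4) by simp
  moreover have "0 < u t * inner (t - Q) (m - Q)" using us(5) k2 by simp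
  ultimately show False using e0 by linarith
qed

lemma vertex_eq:
  assumes "v \<in> V" "v \<noteq> z" "T = convex hull V" "\<forall>u\<in>V. \<not> arcz z v u"
  shows "equilibrium_on T z {v}"
proof -
  have le: "\<forall>u\<in>V. inner (v - z) u \<le> inner (v - z) v"
  proof
    fix u assume "u \<in> V"
    hence "\<not> inner (z - v) (u - v) < 0" using assms(4) unfolding arcz_def by blast
    hence "inner (v - z) (u - v) \<le> 0"
      by (metis inner_minus_left minus_diff_eq neg_le_0_iff_le not_le)
    thus "inner (v - z) u \<le> inner (v - z) v" by (simp add: inner_diff_right)
  qed
  have allT: "\<forall>p\<in>T. inner (v - z) p \<le> inner (v - z) v" by (rule halfspace_hull[OF assms(3) le])
  have vT: "v \<in> T" using assms(1,3) by (simp add: hull_inc)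
  have ne: "v - z \<noteq> 0" using assms(2) by simp
  have int: "T \<inter> {x. inner (v - z) x = inner (v - z) v} \<noteq> {}" using vT by blast
  have sp: "supporting_plane_at T (v - z) v"
    unfolding supporting_plane_at_def using ne int allT by blast
  have "v \<in> rel_interior {v}" by simp
  thus ?thesis unfolding equilibrium_on_def using sp by blast
qed

lemma lemV:
  assumes S: "cfg z w a b c d"
  shows "\<not> ((arcz z b a \<or> arcz z a b) \<and> (arcz z c a \<or> arcz z a c) \<and> (arcz z d a \<or> arcz z a d))"
proof
  assume H: "(arcz z b a \<or> arcz z a b) \<and> (arcz z c a \<or> arcz z a c) \<and> (arcz z d a \<or> arcz z a d)"
  have pos: "0 < gg z y a" if "arcz z y a \<or> arcz z a y" for y
    using that arcz_pos gg_sym by metis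
  have "0 < gg z b a" "0 < gg z c a" "0 < gg z d a" using H pos by auto
  moreover note e = cfg_expand[OF S]
  moreover have "0 < gg z a a" using gg_self_pos cfg_ne[OF S] by auto
  ultimately have "0 < w a * gg z a a + w b * gg z b a + w c * gg z c a + w d * gg z d a"
    by (simp add: add_pos_pos)
  thus False using cfg_W[OF S, of a] by simp
qed

lemma sort3:
  fixes r :: "'a \<Rightarrow> real"
  assumes "distinct [q1,q2,q3]"
  shows "\<exists>x1 x2 x3. {x1,x2,x3} = {q1,q2,q3} \<and> distinct [x1,x2,x3] \<and> r x1 \<le> r x2 \<and> r x2 \<le> r x3"
proof -
  have "(r q1 \<le> r q2 \<and> r q2 \<le> r q3) \<or> (r q1 \<le> r q3 \<and> r q3 \<le> r q2) \<or> (r q2 \<le> r q1 \<and> r q1 \<le> r q3)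
     \<or> (r q2 \<le> r q3 \<and> r q3 \<le> r q1) \<or> (r q3 \<le> r q1 \<and> r q1 \<le> r q2) \<or> (r q3 \<le> r q2 \<and> r q2 \<le> r q1)"
    by linarith
  thus ?thesis
  proof (elim disjE)
    assume "r q1 \<le> r q2 \<and> r q2 \<le> r q3" thus ?thesis using assms by (intro exI[of _ q1] exI[of _ q2] exI[of _ q3]) auto
  next
    assume "r q1 \<le> r q3 \<and> r q3 \<le> r q2" thus ?thesis using assms by (intro exI[of _ q1] exI[of _ q3] exI[of _ q2]) auto
  next
    assume "r q2 \<le> r q1 \<and> r q1 \<le> r q3" thus ?thesis using assms by (intro exI[of _ q2] exI[of _ q1] exI[of _ q3]) auto
  next
    assume "r q2 \<le> r q3 \<and> r q3 \<le> r q1" thus ?thesis using assms by (intro exI[of _ q2] exI[of _ q3] exI[of _ q1]) auto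
  next
    assume "r q3 \<le> r q1 \<and> r q1 \<le> r q2" thus ?thesis using assms by (intro exI[of _ q3] exI[of _ q1] exI[of _ q2]) auto
  next
    assume "r q3 \<le> r q2 \<and> r q2 \<le> r q1" thus ?thesis using assms by (intro exI[of _ q3] exI[of _ q2] exI[of _ q1]) auto
  qed
qed

lemma path_lemma:
  fixes r :: "'a \<Rightarrow> real" and R :: "'a \<Rightarrow> 'a \<Rightarrow> bool"
  assumes dist: "distinct [q1,q2,q3,D]"
    and out: "\<And>x. x \<in> {q1,q2,q3} \<Longrightarrow> \<exists>y\<in>{q1,q2,q3,D}. R x y"
    and incr: "\<And>x y. R x y \<Longrightarrow> r x < r y"
    and lemV: "\<And>M p1 p2 p3. {M,p1,p2,p3} = {q1,q2,q3,D} \<Longrightarrow> distinct [M,p1,p2,p3] \<Longrightarrow>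
        \<not> ((R p1 M \<or> R M p1) \<and> (R p2 M \<or> R M p2) \<and> (R p3 M \<or> R M p3))"
  shows "\<exists>a b c d. distinct [a,b,c,d] \<and> {a,b,c,d} = {q1,q2,q3,D} \<and> R a b \<and> R b c \<and> (R c d \<or> R d c)"
proof -
  have d3: "distinct [q1,q2,q3]" using dist by auto
  obtain x1 x2 x3 where s: "{x1,x2,x3} = {q1,q2,q3}" "distinct [x1,x2,x3]" "r x1 \<le> r x2" "r x2 \<le> r x3"
    using sort3[OF d3, of r] by blast
  have VV: "{x1,x2,x3,D} = {q1,q2,q3,D}" using s(1) by auto
  have dD: "D \<notin> {x1,x2,x3}" using s(1) dist by auto
  have dist4: "distinct [x1,x2,x3,D]" using s(2) dD by auto
  have out': "\<exists>y\<in>{x1,x2,x3,D}. R x y" if "x \<in> {x1,x2,x3}" for x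
    using out[of x] that s(1) VV by auto
  obtain y3 where y3: "y3 \<in> {x1,x2,x3,D}" "R x3 y3" using out'[of x3] by auto
  have "r x3 < r y3" using incr y3(2) .
  hence "y3 = D" using y3(1) s(3,4) by auto
  hence R3: "R x3 D" using y3 by simp
  obtain y2 where y2: "y2 \<in> {x1,x2,x3,D}" "R x2 y2" using out'[of x2] by auto
  have "r x2 < r y2" using incr y2(2) .
  hence y2c: "y2 = x3 \<or> y2 = D" using y2(1) s(3) by auto
  obtain y1 where y1: "y1 \<in> {x1,x2,x3,D}" "R x1 y1" using out'[of x1] by auto
  have "r x1 < r y1" using incr y1(2) .
  hence y1c: "y1 = x2 \<or> y1 = x3 \<or> y1 = D" using y1(1) by auto
  have G: "\<And>a b c d. distinct [a,b,c,d] \<Longrightarrow> {a,b,c,d} = {x1,x2,x3,D} \<Longrightarrow> R a b \<Longrightarrow> R b c \<Longrightarrow> (R c d \<or> R d c) \<Longrightarrow> ?thesis"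
    using VV by metis
  from y2c show ?thesis
  proof
    assume "y2 = x3"
    hence R2: "R x2 x3" using y2 by simp
    have "\<not> ((R x1 x3 \<or> R x3 x1) \<and> (R x2 x3 \<or> R x3 x2) \<and> (R D x3 \<or> R x3 D))"
      by (rule lemV) (use VV dist4 in auto)
    hence "\<not> R x1 x3" using R2 R3 by blast
    hence "y1 = x2 \<or> y1 = D" using y1c y1 by auto
    thus ?thesis
    proof
      assume "y1 = x2"
      hence "R x1 x2" using y1 by simp
      thus ?thesis using R2 R3 dist4 by (intro G[of x1 x2 x3 D]) auto
    next
      assume "y1 = D"
      hence "R x1 D" using y1 by simp
      thus ?thesis using R2 R3 dist4 by (intro G[of x2 x3 D x1]) auto
    qed
  next
    assume "y2 = D"
    hence R2: "R x2 D" using y2 by simp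
    have "\<not> ((R x1 D \<or> R D x1) \<and> (R x2 D \<or> R D x2) \<and> (R x3 D \<or> R D x3))"
      by (rule lemV) (use VV dist4 in auto)
    hence "\<not> R x1 D" using R2 R3 by blast
    hence "y1 = x2 \<or> y1 = x3" using y1c y1 by auto
    thus ?thesis
    proof
      assume "y1 = x2"
      hence "R x1 x2" using y1 by simp
      thus ?thesis using R2 R3 dist4 by (intro G[of x1 x2 D x3]) auto
    next
      assume "y1 = x3"
      hence "R x1 x3" using y1 by simp
      thus ?thesis using R2 R3 dist4 by (intro G[of x1 x3 D x2]) auto
    qed
  qed
qed
lemma tet_obtain:
  assumes "is_tetrahedron T"
  obtains a b c d where "distinct [a,b,c,d]" "\<not> affine_dependent {a,b,c,d}" "T = convex hull {a,b,c,d}"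
proof -
  obtain V where V: "finite V" "card V = 4" "\<not> affine_dependent V" "T = convex hull V"
    using assms unfolding is_tetrahedron_def by blast
  from V(2) obtain a b c d where "V = {a,b,c,d}" "distinct [a,b,c,d]"
    by (auto simp: card_Suc_eq numeral_eq_Suc)
  thus ?thesis using that V by blast
qed

lemma tet_cfg:
  assumes D: "distinct [a,b,c,d]" and ind: "\<not> affine_dependent {a,b,c,d}"
    and z: "z \<in> interior (convex hull {a,b,c,d})"
  obtains w where "cfg z w a b c d"
proof -
  have card: "card {a,b,c,d} = 4" using D by simp
  have "\<not> card {a,b,c,d} \<le> DIM(real^3)" using card by simp
  then obtain u where u: "\<forall>x\<in>{a,b,c,d}. 0 < u x \<and> u x < 1" "sum u {a,b,c,d} = 1"
      "(\<Sum>x\<in>{a,b,c,d}. u x *\<^sub>R x) = z"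
    using z unfolding interior_convex_hull_explicit[OF ind] by auto
  have "cfg z u a b c d" unfolding cfg_def using D ind u by auto
  thus ?thesis using that by blast
qed

lemma hull_single_eq:
  fixes v :: "real^3"
  assumes "{v} = convex hull C"
  shows "C = {v}"
proof -
  have "C \<subseteq> convex hull C" by (rule hull_subset)
  hence sub: "C \<subseteq> {v}" using assms by simp
  have "C \<noteq> {}"
  proof
    assume "C = {}"
    hence "convex hull C = {}" by simp
    thus False using assms by simp
  qed
  thus ?thesis using sub by blast
qed

lemma vertices_tet:
  fixes S :: "(real^3) set"
  assumes ind: "\<not> affine_dependent S"
  shows "vertices_of (convex hull S) = S"
proof
  show "vertices_of (convex hull S) \<subseteq> S"
  proof
    fix v assume "v \<in> vertices_of (convex hull S)"
    hence "{v} face_of convex hull S" unfolding vertices_of_def by simp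
    then obtain C where "C \<subseteq> S" "{v} = convex hull C"
      using face_of_convex_hull_affine_independent[OF ind] by blast
    thus "v \<in> S" using hull_single_eq by blast
  qed
next
  show "S \<subseteq> vertices_of (convex hull S)"
  proof
    fix v assume v: "v \<in> S"
    have "{v} = convex hull {v}" by simp
    hence "{v} face_of convex hull S"
      using face_of_convex_hull_affine_independent[OF ind] v by blast
    thus "v \<in> vertices_of (convex hull S)" unfolding vertices_of_def by simp
  qed
qed

lemma aff_dim_hull_sub:
  fixes S C :: "(real^3) set"
  assumes ind: "\<not> affine_dependent S" and C: "C \<subseteq> S" and fin: "finite S"
  shows "aff_dim (convex hull C) = int (card C) - 1"
proof -
  have "\<not> affine_dependent C" using affine_dependent_subset ind C by blast
  hence "int (card C) = aff_dim C + 1" using aff_dim_affine_independent by fastforce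
  thus ?thesis by (simp add: aff_dim_convex_hull)
qed

lemma three_subsets:
  fixes a b c d :: "'a"
  assumes D: "distinct [a,b,c,d]" and C: "C \<subseteq> {a,b,c,d}" and card: "card C = 3"
  shows "C = {a,b,c} \<or> C = {a,b,d} \<or> C = {a,c,d} \<or> C = {b,c,d}"
proof -
  have fin: "finite {a,b,c,d}" by simp
  have c4: "card {a,b,c,d} = 4" using D by simp
  have "card ({a,b,c,d} - C) = 1" using card_Diff_subset[OF finite_subset[OF C fin] C] c4 card by simp
  then obtain x where x: "{a,b,c,d} - C = {x}" by (auto simp: card_Suc_eq)
  hence xin: "x \<in> {a,b,c,d}" by auto
  have Ceq: "C = {a,b,c,d} - {x}" using x C by blast
  show ?thesis using xin D unfolding Ceq by auto
qed

lemma faces_tet: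
  fixes a b c d :: "real^3"
  assumes D: "distinct [a,b,c,d]" and ind: "\<not> affine_dependent {a,b,c,d}"
  shows "faces_of (convex hull {a,b,c,d}) =
    {convex hull {a,b,c}, convex hull {a,b,d}, convex hull {a,c,d}, convex hull {b,c,d}}"
proof -
  have fin: "finite {a,b,c,d}" by simp
  have fc: "F \<in> faces_of (convex hull {a,b,c,d}) \<longleftrightarrow> (\<exists>C. C \<subseteq> {a,b,c,d} \<and> card C = 3 \<and> F = convex hull C)" for F
  proof
    assume "F \<in> faces_of (convex hull {a,b,c,d})"
    hence F: "F face_of convex hull {a,b,c,d}" "aff_dim F = 2" unfolding faces_of_def by auto
    then obtain C where C: "C \<subseteq> {a,b,c,d}" "F = convex hull C"
      using face_of_convex_hull_affine_independent[OF ind] by blast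
    have "aff_dim F = int (card C) - 1" using aff_dim_hull_sub[OF ind C(1) fin] C(2) by simp
    hence "card C = 3" using F(2) by simp
    thus "\<exists>C. C \<subseteq> {a,b,c,d} \<and> card C = 3 \<and> F = convex hull C" using C by blast
  next
    assume "\<exists>C. C \<subseteq> {a,b,c,d} \<and> card C = 3 \<and> F = convex hull C"
    then obtain C where C: "C \<subseteq> {a,b,c,d}" "card C = 3" "F = convex hull C" by blast
    have "F face_of convex hull {a,b,c,d}"
      using face_of_convex_hull_affine_independent[OF ind] C by blast
    moreover have "aff_dim F = 2" using aff_dim_hull_sub[OF ind C(1) fin] C by simp
    ultimately show "F \<in> faces_of (convex hull {a,b,c,d})" unfolding faces_of_def by simp
  qed
  show ?thesis
  proof (rule set_eqI)
    fix F
    show "F \<in> faces_of (convex hull {a,b,c,d}) \<longleftrightarrow>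
      F \<in> {convex hull {a,b,c}, convex hull {a,b,d}, convex hull {a,c,d}, convex hull {b,c,d}}"
    proof
      assume "F \<in> faces_of (convex hull {a,b,c,d})"
      then obtain C where C: "C \<subseteq> {a,b,c,d}" "card C = 3" "F = convex hull C" using fc by blast
      show "F \<in> {convex hull {a,b,c}, convex hull {a,b,d}, convex hull {a,c,d}, convex hull {b,c,d}}"
        using three_subsets[OF D C(1,2)] C(3) by blast
    next
      assume "F \<in> {convex hull {a,b,c}, convex hull {a,b,d}, convex hull {a,c,d}, convex hull {b,c,d}}"
      hence "F = convex hull {a,b,c} \<or> F = convex hull {a,b,d} \<or> F = convex hull {a,c,d} \<or> F = convex hull {b,c,d}"
        by blast
      moreover have "card {a,b,c} = 3" "card {a,b,d} = 3" "card {a,c,d} = 3" "card {b,c,d} = 3"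
        using D by auto
      moreover have "{a,b,c} \<subseteq> {a,b,c,d}" "{a,b,d} \<subseteq> {a,b,c,d}" "{a,c,d} \<subseteq> {a,b,c,d}" "{b,c,d} \<subseteq> {a,b,c,d}"
        by auto
      ultimately have "\<exists>C. C \<subseteq> {a,b,c,d} \<and> card C = 3 \<and> F = convex hull C"
        by (elim disjE) (rule exI, (erule conjI[rotated], simp)?; blast)+
      thus "F \<in> faces_of (convex hull {a,b,c,d})" unfolding fc .
    qed
  qed
qed
lemma split_D:
  fixes D :: 'a
  assumes "D \<in> {p1,p2,p3,p4}" "distinct [p1,p2,p3,p4]"
  shows "\<exists>q1 q2 q3. distinct [q1,q2,q3,D] \<and> {q1,q2,q3,D} = {p1,p2,p3,p4}"
proof -
  have "D = p1 \<or> D = p2 \<or> D = p3 \<or> D = p4" using assms(1) by blast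
  thus ?thesis
  proof (elim disjE)
    assume "D = p1" thus ?thesis using assms(2) by (intro exI[of _ p2] exI[of _ p3] exI[of _ p4]) auto
  next
    assume "D = p2" thus ?thesis using assms(2) by (intro exI[of _ p1] exI[of _ p3] exI[of _ p4]) auto
  next
    assume "D = p3" thus ?thesis using assms(2) by (intro exI[of _ p1] exI[of _ p2] exI[of _ p4]) auto
  next
    assume "D = p4" thus ?thesis using assms(2) by (intro exI[of _ p1] exI[of _ p2] exI[of _ p3]) auto
  qed
qed

lemma hull_ne_faces:
  fixes a b c d :: "real^3"
  assumes D: "distinct [a,b,c,d]" and ind: "\<not> affine_dependent {a,b,c,d}"
  shows "convex hull {a,b,d} \<noteq> convex hull {a,c,d}"
proof
  assume eq: "convex hull {a,b,d} = convex hull {a,c,d}"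
  have "c \<in> convex hull {a,c,d}" by (simp add: hull_inc)
  hence "c \<in> convex hull {a,b,d}" using eq by simp
  hence "c \<in> affine hull {a,b,d}" using convex_hull_subset_affine_hull by blast
  moreover have "{a,b,c,d} - {c} = {a,b,d}" using D by auto
  ultimately have "affine_dependent {a,b,c,d}" unfolding affine_dependent_def by (metis insertCI)
  thus False using ind by simp
qed

theorem corollary1p9:
  fixes T :: "(real^3) set" and c :: "real^3"
  assumes "is_tetrahedron T"
    and "c \<in> interior T"
    and "mono_unstable T c"
  shows "card {F \<in> faces_of T. equilibrium_on T c F} = 2"
proof -
  obtain p1 p2 p3 p4 where P: "distinct [p1,p2,p3,p4]" "\<not> affine_dependent {p1,p2,p3,p4}"
    "T = convex hull {p1,p2,p3,p4}"
    using tet_obtain[OF assms(1)] by blast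
  obtain w where S0: "cfg c w p1 p2 p3 p4"
    using tet_cfg[OF P(1,2)] assms(2) P(3) by blast
  have vert: "vertices_of T = {p1,p2,p3,p4}" using vertices_tet[OF P(2)] P(3) by simp
  obtain D where D: "D \<in> vertices_of T" "equilibrium_on T c {D}"
    and Du: "\<And>v. v \<in> vertices_of T \<Longrightarrow> equilibrium_on T c {v} \<Longrightarrow> v = D"
    using assms(3) unfolding mono_unstable_def by blast
  have DV: "D \<in> {p1,p2,p3,p4}" using D(1) vert by simp
  obtain q1 q2 q3 where Q: "distinct [q1,q2,q3,D]" "{q1,q2,q3,D} = {p1,p2,p3,p4}"
    using split_D[OF DV P(1)] by blast
  have cT: "c \<in> T" using assms(2) interior_subset by blast
  have out: "\<exists>y\<in>{q1,q2,q3,D}. arcz c x y" if x: "x \<in> {q1,q2,q3}" for x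
  proof (rule ccontr)
    assume na: "\<not> (\<exists>y\<in>{q1,q2,q3,D}. arcz c x y)"
    have xV: "x \<in> {p1,p2,p3,p4}" using x Q(2) by auto
    have xD: "x \<noteq> D" using x Q(1) by auto
    have xc: "x \<noteq> c" using cfg_ne_all[OF S0] xV by auto
    have "equilibrium_on T c {x}"
      by (rule vertex_eq[OF xV xc P(3)]) (use na Q(2) in auto)
    hence "x = D" using Du xV vert by simp
    thus False using xD by simp
  qed
  have lemV': "\<not> ((arcz c p1' M \<or> arcz c M p1') \<and> (arcz c p2' M \<or> arcz c M p2') \<and> (arcz c p3' M \<or> arcz c M p3'))"
    if "{M,p1',p2',p3'} = {q1,q2,q3,D}" "distinct [M,p1',p2',p3']" for M p1' p2' p3'
  proof -
    have "cfg c w M p1' p2' p3'" using cfg_perm[OF S0] that Q(2) by simp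
    thus ?thesis by (rule lemV)
  qed
  obtain a b e d where L: "distinct [a,b,e,d]" "{a,b,e,d} = {q1,q2,q3,D}"
    "arcz c a b" "arcz c b e" "arcz c e d \<or> arcz c d e"
    using path_lemma[of q1 q2 q3 D "arcz c" "\<lambda>x. gg c x x", OF Q(1) out arcz_incr lemV'] by blast
  have VL: "{a,b,e,d} = {p1,p2,p3,p4}" using L(2) Q(2) by simp
  have S: "cfg c w a b e d" using cfg_perm[OF S0 VL L(1)] .
  have indL: "\<not> affine_dependent {a,b,e,d}" using S unfolding cfg_def by simp
  have TL: "T = convex hull {a,b,e,d}" using P(3) VL by simp
  note bets = lstar_geom[OF S L(3) L(4) L(5)]
  have eq1: "equilibrium_on T c (convex hull {a,b,d})"
  proof (rule face_eq[of c w a b d e])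
    show "cfg c w a b d e" using cfg_perm[OF S, of a b d e] L(1) by (auto simp: insert_commute)
    show "T = convex hull {a,b,d,e}" using TL by (simp add: insert_commute)
  qed (use bets in auto)
  have eq2: "equilibrium_on T c (convex hull {a,e,d})"
  proof (rule face_eq[of c w a e d b])
    show "cfg c w a e d b" using cfg_perm[OF S, of a e d b] L(1) by (auto simp: insert_commute)
    show "T = convex hull {a,e,d,b}" using TL by (simp add: insert_commute)
  qed (use bets in auto)
  have sub: "{a,b,e,d} \<subseteq> T" unfolding TL by (rule hull_subset)
  have neq1: "\<not> equilibrium_on T c (convex hull {a,b,e})"
  proof (rule two_arcs_no_eq)
    show "\<not> affine_dependent {a,b,e}" using indL by (rule affine_independent_subset) auto
  qed (use L(1,3,4) cT sub in auto)
  have neq2: "\<not> equilibrium_on T c (convex hull {b,e,d})"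
  proof (rule two_arcs_no_eq)
    show "\<not> affine_dependent {b,e,d}" using indL by (rule affine_independent_subset) auto
  qed (use L(1,4,5) cT sub in auto)
  have faces: "faces_of T = {convex hull {a,b,e}, convex hull {a,b,d}, convex hull {a,e,d}, convex hull {b,e,d}}"
    using faces_tet[OF L(1) indL] TL by simp
  have set: "{F \<in> faces_of T. equilibrium_on T c F} = {convex hull {a,b,d}, convex hull {a,e,d}}"
  proof
    show "{F \<in> faces_of T. equilibrium_on T c F} \<subseteq> {convex hull {a,b,d}, convex hull {a,e,d}}"
      unfolding faces using neq1 neq2 by blast
    show "{convex hull {a,b,d}, convex hull {a,e,d}} \<subseteq> {F \<in> faces_of T. equilibrium_on T c F}"
      unfolding faces using eq1 eq2 by blast
  qed
  have "convex hull {a,b,d} \<noteq> convex hull {a,e,d}" by (rule hull_ne_faces[OF L(1) indL])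
  thus ?thesis unfolding set by simp
qed

end
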